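(* Let $p\in\mathbb N$. (i) If $\mathbf K$ is a finite field, the group $\mathrm{GL}_{p-rec}(\mathbf K)$ is residually finite. (ii) If $\mathbf K$ is an arbitrary (commutative) field, every finitely generated subgroup $\Gamma\subset\mathrm{GL}_{p-rec}(\mathbf K)$ is residually finite.
   Context: $\mathcal M_{p\times p}$ is the monoid of pairs $(U,W)$ of words of common length over $\{0,\dots,p-1\}$. For $A:\mathcal M_{p\times p}\to\mathbf K$ (values $A[U,W]$), shift maps act by $(\rho(S,T)A)[U,W]=A[US,WT]$; $\mathrm{Rec}_{p\times p}(\mathbf K)$ is the set of $A$ for which the span of $\{\rho(S,T)A\}$ is finite-dimensional. It is an algebra for $(AB)[U,W]=\sum_{V\in\{0,\dots,p-1\}^l}A[U,V]B[V,W]$ ($(U,W)$ of length $l$) with identity $\mathrm{Id}[U,W]=\delta_{U,W}$. $\mathrm{GL}_{p-rec}(\mathbf K)$ is the group of units of $\mathrm{Rec}_{p\times p}(\mathbf K)$. A group $\Gamma$ is residually finite if for every $\gamma\ne1$ there is a homomorphism $\pi$ to a finite group with $\pi(\gamma)\ne1$. *)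

theory Defs
  imports "HOL-Algebra.Algebra"
begin

text \<open>Words over the alphabet {0,...,p-1} are lists of naturals with entries < p.
  A function on the monoid M_{p x p} is represented as a function of two lists,
  required to vanish outside the monoid (pairs of words of common length).\<close>

definition valid_pair :: "nat \<Rightarrow> nat list \<Rightarrow> nat list \<Rightarrow> bool" where
  "valid_pair p U W \<longleftrightarrow> length U = length W \<and> set U \<subseteq> {..<p} \<and> set W \<subseteq> {..<p}"

definition words :: "nat \<Rightarrow> nat \<Rightarrow> nat list set" where
  "words p l = {V. length V = l \<and> set V \<subseteq> {..<p}}"

definition is_pseries :: "nat \<Rightarrow> (nat list \<Rightarrow> nat list \<Rightarrow> 'k::field) \<Rightarrow> bool" where
  "is_pseries p A \<longleftrightarrow> (\<forall>U W. \<not> valid_pair p U W \<longrightarrow> A U W = 0)"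

definition shift :: "(nat list \<Rightarrow> nat list \<Rightarrow> 'k) \<Rightarrow> nat list \<Rightarrow> nat list \<Rightarrow> (nat list \<Rightarrow> nat list \<Rightarrow> 'k)" where
  "shift A S T = (\<lambda>U W. A (U @ S) (W @ T))"

text \<open>Recognizable: the linear span of all shifts is finite-dimensional, i.e. all shifts
  lie in the span of a finite family F.\<close>
definition recognizable :: "nat \<Rightarrow> (nat list \<Rightarrow> nat list \<Rightarrow> 'k::field) \<Rightarrow> bool" where
  "recognizable p A \<longleftrightarrow> is_pseries p A \<and>
     (\<exists>F. finite F \<and> (\<forall>S T. valid_pair p S T \<longrightarrow>
        (\<exists>c. shift A S T = (\<lambda>U W. \<Sum>f\<in>F. c f * f U W))))"

definition rec_mult :: "nat \<Rightarrow> (nat list \<Rightarrow> nat list \<Rightarrow> 'k::field) \<Rightarrow> (nat list \<Rightarrow> nat list \<Rightarrow> 'k) \<Rightarrow> (nat list \<Rightarrow> nat list \<Rightarrow> 'k)" where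
  "rec_mult p A B = (\<lambda>U W. if valid_pair p U W
      then (\<Sum>V\<in>words p (length U). A U V * B V W) else 0)"

definition rec_id :: "nat \<Rightarrow> (nat list \<Rightarrow> nat list \<Rightarrow> 'k::field)" where
  "rec_id p = (\<lambda>U W. if valid_pair p U W \<and> U = W then 1 else 0)"

definition Rec_monoid :: "nat \<Rightarrow> (nat list \<Rightarrow> nat list \<Rightarrow> 'k::field) monoid" where
  "Rec_monoid p = \<lparr>carrier = {A. recognizable p A}, Group.monoid.mult = rec_mult p, one = rec_id p\<rparr>"

definition GL_rec :: "nat \<Rightarrow> (nat list \<Rightarrow> nat list \<Rightarrow> 'k::field) monoid" where
  "GL_rec p = units_of (Rec_monoid p)"

text \<open>Residual finiteness. Every finite group is isomorphic to one whose carrier is a set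
  of naturals, so targets are taken to be groups with elements of type nat.\<close>
definition residually_finite :: "('a, 'b) monoid_scheme \<Rightarrow> bool" where
  "residually_finite G \<longleftrightarrow> (\<forall>g\<in>carrier G. g \<noteq> \<one>\<^bsub>G\<^esub> \<longrightarrow>
     (\<exists>(H :: nat monoid) h. group H \<and> finite (carrier H) \<and> h \<in> hom G H \<and> h g \<noteq> \<one>\<^bsub>H\<^esub>))"

end

theory Submission
  imports Defs "HOL-Computational_Algebra.Polynomial" "HOL-Computational_Algebra.Primes"
begin

definition srng :: "'k::field set \<Rightarrow> bool" where
  "srng R \<longleftrightarrow> 0 \<in> R \<and> 1 \<in> R \<and> (\<forall>x\<in>R. \<forall>y\<in>R. x + y \<in> R \<and> x * y \<in> R) \<and> (\<forall>x\<in>R. - x \<in> R)"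

definition idl :: "'k::field set \<Rightarrow> 'k set \<Rightarrow> bool" where
  "idl R I \<longleftrightarrow> I \<subseteq> R \<and> 0 \<in> I \<and> (\<forall>x\<in>I. \<forall>y\<in>I. x + y \<in> I) \<and> (\<forall>x\<in>I. \<forall>r\<in>R. r * x \<in> I)"

definition cofin :: "'k::field set \<Rightarrow> 'k set \<Rightarrow> bool" where
  "cofin R I \<longleftrightarrow> (\<exists>C. finite C \<and> C \<subseteq> R \<and> (\<forall>r\<in>R. \<exists>c\<in>C. r - c \<in> I))"

definition cmax :: "'k::field set \<Rightarrow> 'k set \<Rightarrow> bool" where
  "cmax R I \<longleftrightarrow> idl R I \<and> 1 \<notin> I \<and> cofin R I \<and> (\<forall>r\<in>R. r \<notin> I \<longrightarrow> (\<exists>s\<in>R. r * s - 1 \<in> I))"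

definition PP :: "'k::field set \<Rightarrow> bool" where
  "PP R \<longleftrightarrow> (\<forall>x\<in>R. x \<noteq> 0 \<longrightarrow> (\<exists>I. cmax R I \<and> x \<notin> I))"

definition polin :: "'k::field set \<Rightarrow> 'k poly \<Rightarrow> bool" where
  "polin S h \<longleftrightarrow> (\<forall>i. coeff h i \<in> S)"

definition adj :: "'k::field set \<Rightarrow> 'k \<Rightarrow> 'k set" where
  "adj R a = {poly h a | h. polin R h}"

lemma srngD:
  assumes "srng R"
  shows "0 \<in> R" "1 \<in> R" "x \<in> R \<Longrightarrow> y \<in> R \<Longrightarrow> x + y \<in> R"
    "x \<in> R \<Longrightarrow> y \<in> R \<Longrightarrow> x * y \<in> R" "x \<in> R \<Longrightarrow> - x \<in> R"
    "x \<in> R \<Longrightarrow> y \<in> R \<Longrightarrow> x - y \<in> R"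
  using assms unfolding srng_def diff_conv_add_uminus by blast+

lemma srng_sum: assumes "srng R" "\<And>i. i \<in> A \<Longrightarrow> f i \<in> R" shows "sum f A \<in> R"
proof (cases "finite A")
  case True
  then show ?thesis using assms(2)
  proof (induction A rule: finite_induct)
    case empty then show ?case using srngD(1)[OF assms(1)] by simp
  next
    case (insert x F) then show ?case using srngD(3)[OF assms(1)] by simp
  qed
qed (simp add: srngD[OF assms(1)])

lemma srng_pow: assumes "srng R" "x \<in> R" shows "x ^ n \<in> R"
  by (induction n) (simp_all add: srngD(2,4)[OF assms(1)] assms(2))

lemma idl_0: "idl R I \<Longrightarrow> 0 \<in> I" unfolding idl_def by blast
lemma idl_sub: "idl R I \<Longrightarrow> x \<in> I \<Longrightarrow> x \<in> R" unfolding idl_def by blast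
lemma idl_add: "idl R I \<Longrightarrow> x \<in> I \<Longrightarrow> y \<in> I \<Longrightarrow> x + y \<in> I" unfolding idl_def by blast
lemma idl_lmult: "idl R I \<Longrightarrow> x \<in> I \<Longrightarrow> r \<in> R \<Longrightarrow> r * x \<in> I" unfolding idl_def by blast
lemma idl_rmult: "idl R I \<Longrightarrow> x \<in> I \<Longrightarrow> r \<in> R \<Longrightarrow> x * r \<in> I"
  using idl_lmult[of R I x r] by (simp add: mult.commute)
lemma idl_neg: "idl R I \<Longrightarrow> srng R \<Longrightarrow> x \<in> I \<Longrightarrow> - x \<in> I"
  using idl_lmult[of R I x "- 1"] srngD(2)[of R] srngD(5)[of R 1] by simp
lemma idl_diff: "idl R I \<Longrightarrow> srng R \<Longrightarrow> x \<in> I \<Longrightarrow> y \<in> I \<Longrightarrow> x - y \<in> I"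
  using idl_add[of R I x "- y"] idl_neg[of R I y] by simp

lemma idl_sum: assumes "idl R I" "\<And>i. i \<in> A \<Longrightarrow> f i \<in> I" shows "sum f A \<in> I"
proof (cases "finite A")
  case True
  then show ?thesis using assms(2)
  proof (induction A rule: finite_induct)
    case empty then show ?case using idl_0[OF assms(1)] by simp
  next
    case (insert x F) then show ?case using idl_add[OF assms(1)] by simp
  qed
qed (simp add: idl_0[OF assms(1)])

lemma polin_add: "srng R \<Longrightarrow> polin R p \<Longrightarrow> polin R q \<Longrightarrow> polin R (p + q)"
  unfolding polin_def by (auto intro: srngD(3))
lemma polin_minus: "srng R \<Longrightarrow> polin R p \<Longrightarrow> polin R (- p)"
  unfolding polin_def by (auto intro: srngD(5))
lemma polin_diff: "srng R \<Longrightarrow> polin R p \<Longrightarrow> polin R q \<Longrightarrow> polin R (p - q)"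
  unfolding polin_def by (auto intro: srngD(6))
lemma polin_mult: assumes "srng R" "polin R p" "polin R q" shows "polin R (p * q)"
  unfolding polin_def coeff_mult
proof
  fix n show "(\<Sum>i\<le>n. coeff p i * coeff q (n - i)) \<in> R"
    by (rule srng_sum[OF assms(1)]) (use assms(2,3) in \<open>simp add: polin_def srngD(4)[OF assms(1)]\<close>)
qed
lemma polin_smult: "srng R \<Longrightarrow> c \<in> R \<Longrightarrow> polin R p \<Longrightarrow> polin R (smult c p)"
  unfolding polin_def by (auto intro: srngD(4))
lemma polin_monom: "srng R \<Longrightarrow> c \<in> R \<Longrightarrow> polin R (monom c n)"
  unfolding polin_def by (auto simp: coeff_monom intro: srngD(1))
lemma polin_const: "srng R \<Longrightarrow> c \<in> R \<Longrightarrow> polin R [:c:]"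
  unfolding polin_def by (auto simp: coeff_pCons split: nat.splits intro: srngD(1))
lemma polin_0: "srng R \<Longrightarrow> polin R 0"
  unfolding polin_def by (auto intro: srngD(1))
lemma polin_1: "srng R \<Longrightarrow> polin R 1"
  unfolding polin_def by (auto simp: coeff_1 intro: srngD(1,2))
lemma polin_pow: "srng R \<Longrightarrow> polin R p \<Longrightarrow> polin R (p ^ n)"
  by (induction n) (simp_all add: polin_mult polin_1)

lemma polin_idl_mult: assumes "idl R I" "polin I p" "polin R q" shows "polin I (p * q)"
  unfolding polin_def coeff_mult
proof
  fix n show "(\<Sum>i\<le>n. coeff p i * coeff q (n - i)) \<in> I"
    by (rule idl_sum[OF assms(1)]) (use assms(2,3) in \<open>simp add: polin_def idl_rmult[OF assms(1)]\<close>)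
qed
lemma polin_idl_add: "idl R I \<Longrightarrow> polin I p \<Longrightarrow> polin I q \<Longrightarrow> polin I (p + q)"
  unfolding polin_def by (auto intro!: idl_add)
lemma polin_idl_sub: "idl R I \<Longrightarrow> polin I p \<Longrightarrow> polin R p"
  unfolding polin_def idl_def by auto

lemma poly_in_adj: "polin R h \<Longrightarrow> poly h a \<in> adj R a"
  unfolding adj_def by auto

lemma srng_adj: assumes "srng R" shows "srng (adj R a)"
proof -
  have "0 \<in> adj R a" using poly_in_adj[OF polin_0[OF assms], of a] by simp
  moreover have "1 \<in> adj R a" using poly_in_adj[OF polin_1[OF assms], of a] by simp
  moreover have "x + y \<in> adj R a \<and> x * y \<in> adj R a" if xa: "x \<in> adj R a" and ya: "y \<in> adj R a" for x y
  proof -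
    obtain p where "polin R p" "x = poly p a" using xa unfolding adj_def by blast
    moreover obtain q where "polin R q" "y = poly q a" using ya unfolding adj_def by blast
    ultimately show ?thesis using poly_in_adj[OF polin_add[OF assms], of p q a] poly_in_adj[OF polin_mult[OF assms], of p q a] by auto
  qed
  moreover have "- x \<in> adj R a" if xa: "x \<in> adj R a" for x
  proof -
    obtain p where "polin R p" "x = poly p a" using xa unfolding adj_def by blast
    then show ?thesis using poly_in_adj[OF polin_minus[OF assms], of p a] by auto
  qed
  ultimately show ?thesis unfolding srng_def by blast
qed

lemma sub_adj: assumes "srng R" "r \<in> R" shows "r \<in> adj R a"
  using poly_in_adj[OF polin_const[OF assms], of a] by simp

lemma a_in_adj: assumes "srng R" shows "a \<in> adj R a"
  using poly_in_adj[OF polin_monom[OF assms srngD(2)[OF assms]], of 1 a] by (simp add: poly_monom)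

lemma topzero: "(\<And>j. j \<ge> k \<Longrightarrow> coeff p j = 0) \<Longrightarrow> p = 0 \<or> degree p < k"
  by (metis leading_coeff_0_iff not_le)

lemma cmax_prime:
  assumes R: "srng R" and I: "cmax R I" and u: "u \<in> R" and v: "v \<in> R" and uv: "u * v \<in> I" and nu: "u \<notin> I"
  shows "v \<in> I"
proof -
  have Ii: "idl R I" using I unfolding cmax_def by blast
  obtain s where s: "s \<in> R" "u * s - 1 \<in> I" using I u nu unfolding cmax_def by blast
  have "v = s * (u * v) - v * (u * s - 1)" by (simp add: algebra_simps)
  also have "\<dots> \<in> I" using idl_diff[OF Ii R idl_lmult[OF Ii uv s(1)] idl_lmult[OF Ii s(2) v]] by simp
  finally show ?thesis .
qed

lemma cmax_pow:
  assumes R: "srng R" and I: "cmax R I" and c: "c \<in> R" "c \<notin> I"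
  shows "c ^ m \<notin> I"
proof (induction m)
  case 0 then show ?case using I unfolding cmax_def by simp
next
  case (Suc m)
  then show ?case using cmax_prime[OF R I c(1) srng_pow[OF R c(1)], of m] c(2) by auto
qed

lemma lemD:
  assumes R: "srng R" and I: "idl R I" and prime: "\<And>u v. u \<in> R \<Longrightarrow> v \<in> R \<Longrightarrow> u * v \<in> I \<Longrightarrow> u \<notin> I \<Longrightarrow> v \<in> I"
   and G: "polin R G" and k: "polin R k" and lG: "lead_coeff G \<notin> I" and dG: "degree G \<ge> 1"
   and hi: "\<And>i. i \<ge> 1 \<Longrightarrow> coeff (G * k) i \<in> I"
  shows "coeff (G * k) 0 \<in> I"
proof (cases "\<forall>i. coeff k i \<in> I")
  case True
  then show ?thesis using G by (simp add: coeff_mult polin_def idl_lmult[OF I])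
next
  case False
  define S where "S = {i. coeff k i \<notin> I}"
  have "S \<subseteq> {..degree k}"
  proof
    fix i assume "i \<in> S"
    then have "coeff k i \<noteq> 0" using idl_0[OF I] unfolding S_def by auto
    then show "i \<in> {..degree k}" using le_degree by auto
  qed
  then have fin: "finite S" using finite_subset by blast
  have ne: "S \<noteq> {}" using False unfolding S_def by auto
  define m where "m = Max S"
  have km: "coeff k m \<notin> I" using Max_in[OF fin ne] unfolding m_def S_def by auto
  have kgt: "coeff k j \<in> I" if "j > m" for j
    using Max_ge[OF fin, of j] that unfolding m_def S_def by force
  define N where "N = degree G"
  have GR: "coeff G i \<in> R" for i using G unfolding polin_def by auto
  have kR: "coeff k i \<in> R" for i using k unfolding polin_def by auto
  have eq: "coeff (G * k) (N + m) = coeff G N * coeff k (N + m - N) + (\<Sum>i\<in>{..N+m} - {N}. coeff G i * coeff k (N + m - i))"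
    unfolding coeff_mult by (rule sum.remove) auto
  have rest: "(\<Sum>i\<in>{..N+m} - {N}. coeff G i * coeff k (N + m - i)) \<in> I"
  proof (rule idl_sum[OF I])
    fix i assume i: "i \<in> {..N+m} - {N}"
    show "coeff G i * coeff k (N + m - i) \<in> I"
    proof (cases "i < N")
      case True
      then have "coeff k (N + m - i) \<in> I" using kgt i by auto
      then show ?thesis using idl_lmult[OF I _ GR] by auto
    next
      case False
      then have "i > N" using i by auto
      then have "coeff G i = 0" unfolding N_def by (simp add: coeff_eq_0)
      then show ?thesis using idl_0[OF I] by simp
    qed
  qed
  have top: "coeff G N * coeff k m \<notin> I"
    using prime[OF GR kR, of N m] lG km unfolding N_def by auto
  have "coeff (G * k) (N + m) \<in> I" using hi dG unfolding N_def by auto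
  then have "coeff (G * k) (N + m) - (\<Sum>i\<in>{..N+m} - {N}. coeff G i * coeff k (N + m - i)) \<in> I"
    using idl_diff[OF I R _ rest] by auto
  then have "coeff G N * coeff k m \<in> I" using eq by simp
  then show ?thesis using top by blast
qed

lemma pdiv:
  assumes R: "srng R" and g: "polin R g" "g \<noteq> 0"
  shows "polin R h \<Longrightarrow> \<exists>m q r. polin R q \<and> polin R r \<and> smult (lead_coeff g ^ m) h = q * g + r \<and> (r = 0 \<or> degree r < degree g)"
proof (induction "degree h" arbitrary: h rule: less_induct)
  case less
  show ?case
  proof (cases "h = 0 \<or> degree h < degree g")
    case True
    then show ?thesis
      by (intro exI[of _ 0] exI[of _ "0::'a poly"] exI[of _ h]) (auto simp: polin_0[OF R] less.prems)
  next
    case False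
    then have h0: "h \<noteq> 0" and dgh: "degree g \<le> degree h" by auto
    define k where "k = degree h"
    define n where "n = degree g"
    define c where "c = lead_coeff g"
    define lh where "lh = lead_coeff h"
    have cR: "c \<in> R" using g unfolding polin_def c_def by auto
    have lhR: "lh \<in> R" using less.prems unfolding polin_def lh_def by auto
    define h1 where "h1 = smult c h - monom lh (k - n) * g"
    have ph1: "polin R h1" unfolding h1_def
      by (intro polin_diff polin_smult polin_mult polin_monom R cR lhR g less.prems)
    have "coeff h1 j = 0" if "j \<ge> k" for j
    proof (cases "j = k")
      case True
      then show ?thesis using dgh unfolding h1_def coeff_diff coeff_smult coeff_monom_mult k_def n_def c_def lh_def
        by simp
    next
      case False
      then have "j > k" using that by auto
      then have "coeff h j = 0" "coeff g (j - (k - n)) = 0" using dgh unfolding k_def n_def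
        by (auto intro!: coeff_eq_0)
      then show ?thesis unfolding h1_def coeff_diff coeff_smult coeff_monom_mult by simp
    qed
    then have h1d: "h1 = 0 \<or> degree h1 < k" using topzero by blast
    show ?thesis
    proof (cases "h1 = 0")
      case True
      then have "smult (c ^ 1) h = monom lh (k - n) * g + 0" unfolding h1_def by simp
      then show ?thesis using polin_monom[OF R lhR] polin_0[OF R] unfolding c_def by blast
    next
      case False
      then have "degree h1 < degree h" using h1d unfolding k_def by auto
      then obtain m q r where mqr: "polin R q" "polin R r" "smult (lead_coeff g ^ m) h1 = q * g + r" "r = 0 \<or> degree r < degree g"
        using less.hyps ph1 by blast
      have "smult (c ^ Suc m) h = smult (c ^ m) (smult c h)" by (simp add: mult.commute)
      also have "smult c h = h1 + monom lh (k - n) * g" unfolding h1_def by simp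
      also have "smult (c ^ m) (h1 + monom lh (k - n) * g) = (q + smult (c ^ m) (monom lh (k - n))) * g + r"
        using mqr(3) unfolding c_def by (simp add: smult_add_right algebra_simps)
      finally have "smult (lead_coeff g ^ Suc m) h = (q + smult (c ^ m) (monom lh (k - n))) * g + r" unfolding c_def .
      moreover have "polin R (q + smult (c ^ m) (monom lh (k - n)))"
        by (intro polin_add polin_smult polin_monom R mqr(1) lhR srng_pow cR)
      ultimately show ?thesis using mqr(2,4) by blast
    qed
  qed
qed

lemma elem:
  assumes R: "srng R" and f: "polin R f" and g: "polin R g" "g \<noteq> 0" "poly g a = 0"
   and gmin: "\<And>h. polin R h \<Longrightarrow> h \<noteq> 0 \<Longrightarrow> poly h a = 0 \<Longrightarrow> degree g \<le> degree h"
   and x: "poly f a \<noteq> 0"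
  shows "\<exists>u e. polin R u \<and> e \<in> R \<and> e \<noteq> 0 \<and> poly u a * poly f a = e"
proof -
  define Comb where "Comb = {h. h \<noteq> 0 \<and> (\<exists>u v. polin R u \<and> polin R v \<and> h = u * f + v * g)}"
  have "f \<in> Comb" unfolding Comb_def using x polin_1[OF R] polin_0[OF R]
    by (intro CollectI conjI exI[of _ 1] exI[of _ 0]) auto
  then obtain h where h: "h \<in> Comb" and hmin: "\<And>h'. h' \<in> Comb \<Longrightarrow> degree h \<le> degree h'"
    using ex_has_least_nat[of "\<lambda>h. h \<in> Comb" f degree] by blast
  obtain u v where uv: "polin R u" "polin R v" "h = u * f + v * g" "h \<noteq> 0" using h unfolding Comb_def by blast
  have ph: "polin R h" using uv by (simp add: polin_add polin_mult R f g)
  show ?thesis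
  proof (cases "degree h = 0")
    case True
    have "[:coeff h 0:] = h" using degree_0_id[OF True] .
    then have "poly h a = poly [:coeff h 0:] a" by simp
    then have e: "poly h a = coeff h 0" by simp
    have "coeff h 0 \<noteq> 0" using uv(4) True leading_coeff_0_iff[of h] by simp
    moreover have "poly h a = poly u a * poly f a" using uv(3) g(3) by simp
    moreover have "coeff h 0 \<in> R" using ph unfolding polin_def by blast
    ultimately show ?thesis using e uv(1) by (intro exI[of _ u] exI[of _ "coeff h 0"]) simp
  next
    case False
    define lh where "lh = lead_coeff h"
    have lh0: "lh \<noteq> 0" using uv(4) unfolding lh_def by simp
    have claim: "\<exists>m q. polin R q \<and> smult (lh ^ m) p = q * h"
      if p: "polin R u'" "polin R v'" "p = u' * f + v' * g" for p u' v'
    proof -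
      have pp: "polin R p" using p by (simp add: polin_add polin_mult R f g)
      obtain m q r where mqr: "polin R q" "polin R r" "smult (lh ^ m) p = q * h + r" "r = 0 \<or> degree r < degree h"
        using pdiv[OF R ph uv(4) pp] unfolding lh_def by blast
      have "r = smult (lh ^ m) p - q * h" using mqr(3) by simp
      also have "\<dots> = (smult (lh ^ m) u' - q * u) * f + (smult (lh ^ m) v' - q * v) * g"
        unfolding p(3) uv(3) by (simp add: algebra_simps smult_add_right)
      finally have req: "r = (smult (lh ^ m) u' - q * u) * f + (smult (lh ^ m) v' - q * v) * g" .
      have lhR: "lh \<in> R" using ph unfolding lh_def polin_def by auto
      moreover have "polin R (smult (lh ^ m) u' - q * u)" "polin R (smult (lh ^ m) v' - q * v)"
        by (intro polin_diff polin_smult polin_mult srng_pow R p mqr uv lhR)+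
      ultimately have "r \<noteq> 0 \<Longrightarrow> r \<in> Comb" unfolding Comb_def using req by blast
      then have "r = 0" using hmin[of r] mqr(4) by (cases "r = 0") auto
      then show ?thesis using mqr by auto
    qed
    obtain m1 q1 where q1: "polin R q1" "smult (lh ^ m1) f = q1 * h"
      using claim[of 1 0 f] polin_1[OF R] polin_0[OF R] by auto
    obtain m2 q2 where q2: "polin R q2" "smult (lh ^ m2) g = q2 * h"
      using claim[of 0 1 g] polin_1[OF R] polin_0[OF R] by auto
    have "lh ^ m1 * poly f a = poly q1 a * poly h a" using arg_cong[OF q1(2), of "\<lambda>p. poly p a"] by simp
    then have pha: "poly h a \<noteq> 0" using lh0 x by auto
    have "0 = poly q2 a * poly h a" using arg_cong[OF q2(2), of "\<lambda>p. poly p a"] g(3) by simp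
    then have q2a: "poly q2 a = 0" using pha by simp
    have q20: "q2 \<noteq> 0"
    proof
      assume "q2 = 0"
      then have "smult (lh ^ m2) g = 0" using q2(2) by simp
      then show False using lh0 g(2) by simp
    qed
    have "degree g = degree (q2 * h)" using arg_cong[OF q2(2), of degree] lh0 by simp
    also have "\<dots> = degree q2 + degree h" using q20 uv(4) by (rule degree_mult_eq)
    finally have "degree q2 < degree g" using False by simp
    with gmin[OF q2(1) q20 q2a] show ?thesis by simp
  qed
qed

definition J0 :: "'k::field set \<Rightarrow> 'k set \<Rightarrow> 'k poly \<Rightarrow> 'k \<Rightarrow> 'k set" where
  "J0 R I G a = {poly u a + poly G a * y | u y. polin I u \<and> y \<in> adj R a}"

lemma J0_idl:
  assumes R: "srng R" and I: "idl R I" and G: "polin R G"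
  shows "idl (adj R a) (J0 R I G a)"
proof -
  have R1: "srng (adj R a)" using srng_adj[OF R] .
  have GA: "poly G a \<in> adj R a" using poly_in_adj[OF G] .
  have sub: "J0 R I G a \<subseteq> adj R a"
  proof
    fix z assume "z \<in> J0 R I G a"
    then obtain u y where z: "z = poly u a + poly G a * y" "polin I u" "y \<in> adj R a" unfolding J0_def by blast
    have "poly u a \<in> adj R a" using poly_in_adj[OF polin_idl_sub[OF I z(2)]] .
    then show "z \<in> adj R a" using z srngD(3,4)[OF R1] GA by simp
  qed
  have pI0: "polin I 0" using idl_0[OF I] unfolding polin_def by simp
  have zero: "0 \<in> J0 R I G a" unfolding J0_def
    by (intro CollectI exI[of _ "0::'a poly"] exI[of _ "0::'a"]) (simp add: pI0 srngD(1)[OF R1])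
  have add: "z1 + z2 \<in> J0 R I G a" if z1: "z1 \<in> J0 R I G a" and z2: "z2 \<in> J0 R I G a" for z1 z2
  proof -
    obtain u1 y1 where 1: "z1 = poly u1 a + poly G a * y1" "polin I u1" "y1 \<in> adj R a" using z1 unfolding J0_def by blast
    obtain u2 y2 where 2: "z2 = poly u2 a + poly G a * y2" "polin I u2" "y2 \<in> adj R a" using z2 unfolding J0_def by blast
    have "z1 + z2 = poly (u1 + u2) a + poly G a * (y1 + y2)" using 1 2 by (simp add: algebra_simps)
    moreover have "polin I (u1 + u2)" using polin_idl_add[OF I 1(2) 2(2)] .
    moreover have "y1 + y2 \<in> adj R a" using srngD(3)[OF R1 1(3) 2(3)] .
    ultimately show ?thesis unfolding J0_def by blast
  qed
  have mul: "r * z \<in> J0 R I G a" if zz: "z \<in> J0 R I G a" and rr: "r \<in> adj R a" for z r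
  proof -
    obtain u y where 1: "z = poly u a + poly G a * y" "polin I u" "y \<in> adj R a" using zz unfolding J0_def by blast
    obtain k where k: "polin R k" "r = poly k a" using rr unfolding adj_def by blast
    have "r * z = poly (u * k) a + poly G a * (r * y)" using 1 k by (simp add: algebra_simps)
    moreover have "polin I (u * k)" using polin_idl_mult[OF I 1(2) k(1)] .
    moreover have "r * y \<in> adj R a" using srngD(4)[OF R1 rr 1(3)] .
    ultimately show ?thesis unfolding J0_def by blast
  qed
  show ?thesis unfolding idl_def using sub zero add mul by blast
qed

lemma I_J0: assumes R: "srng R" and I: "idl R I" and x: "x \<in> I" shows "x \<in> J0 R I G a"
proof -
  have "polin I [:x:]" using x idl_0[OF I] unfolding polin_def by (auto simp: coeff_pCons split: nat.splits)
  moreover have "x = poly [:x:] a + poly G a * 0" by simp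
  moreover have "(0::'a) \<in> adj R a" using srngD(1)[OF srng_adj[OF R]] .
  ultimately show ?thesis unfolding J0_def by blast
qed

lemma G_J0: assumes R: "srng R" and I: "idl R I" shows "poly G a \<in> J0 R I G a"
proof -
  have "polin I 0" using idl_0[OF I] unfolding polin_def by simp
  moreover have "poly G a = poly 0 a + poly G a * 1" by simp
  moreover have "(1::'a) \<in> adj R a" using srngD(2)[OF srng_adj[OF R]] .
  ultimately show ?thesis unfolding J0_def by blast
qed

lemma coeff_summonom: "coeff (\<Sum>i<n. monom (c i) i) j = (if j < n then c j else 0)"
  by (simp add: coeff_sum coeff_monom)

lemma J0_cofin:
  assumes R: "srng R" and I: "idl R I" and cI: "cofin R I" and G: "polin R G" and dG: "degree G \<ge> 1"
    and t: "t \<in> R" and lt: "lead_coeff G * t - 1 \<in> I"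
  shows "cofin (adj R a) (J0 R I G a)"
proof -
  define n where "n = degree G"
  have n1: "n \<ge> 1" using dG unfolding n_def .
  define lG where "lG = lead_coeff G"
  have lGR: "lG \<in> R" using G unfolding polin_def lG_def by auto
  have Jd: "idl (adj R a) (J0 R I G a)" using J0_idl[OF R I G] .
  have R1: "srng (adj R a)" using srng_adj[OF R] .
  have aR: "a \<in> adj R a" using a_in_adj[OF R] .
  obtain C where C: "finite C" "C \<subseteq> R" "\<And>r. r \<in> R \<Longrightarrow> \<exists>c\<in>C. r - c \<in> I" using cI unfolding cofin_def by blast
  have step1: "polin R h \<Longrightarrow> \<exists>h'. polin R h' \<and> degree h' < n \<and> poly h a - poly h' a \<in> J0 R I G a" for h
  proof (induction "degree h" arbitrary: h rule: less_induct)
    case less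
    show ?case
    proof (cases "degree h < n")
      case True
      then show ?thesis using less.prems idl_0[OF Jd] by (intro exI[of _ h]) simp
    next
      case False
      define k where "k = degree h"
      define lh where "lh = lead_coeff h"
      have lhR: "lh \<in> R" using less.prems unfolding polin_def lh_def by auto
      define h1 where "h1 = h - monom (lh * t) (k - n) * G - monom (lh * (1 - lG * t)) k"
      have onem: "1 - lG * t \<in> R" using srngD(2,6)[OF R] srngD(4)[OF R lGR t] by auto
      have ph1: "polin R h1" unfolding h1_def
        by (intro polin_diff polin_mult polin_monom R less.prems G srngD(4)[OF R] lhR t onem)
      have "coeff h1 j = 0" if "j \<ge> k" for j
      proof (cases "j = k")
        case True
        have "coeff h1 k = lh - lh * t * lG - lh * (1 - lG * t)"
          using False unfolding h1_def coeff_diff coeff_monom_mult k_def n_def lh_def lG_def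
          by (simp add: coeff_monom)
        also have "\<dots> = 0" by (simp add: algebra_simps)
        finally show ?thesis using True by simp
      next
        case False
        then have "j > k" using that by auto
        then have "coeff h j = 0" "coeff G (j - (k - n)) = 0" using \<open>\<not> degree h < n\<close> unfolding k_def n_def
          by (auto intro!: coeff_eq_0)
        then show ?thesis using False unfolding h1_def coeff_diff coeff_monom_mult by (simp add: coeff_monom)
      qed
      then have h1d: "h1 = 0 \<or> degree h1 < k" using topzero by blast
      have diff: "poly h a - poly h1 a = poly (monom (lh * (1 - lG * t)) k) a + poly G a * (lh * t * a ^ (k - n))"
        unfolding h1_def by (simp add: poly_monom algebra_simps)
      have "polin I (monom (lh * (1 - lG * t)) k)"
      proof -
        have "1 - lG * t = - (lG * t - 1)" by simp
        then have "1 - lG * t \<in> I" using idl_neg[OF I R lt[folded lG_def]] by simp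
        then have "lh * (1 - lG * t) \<in> I" using idl_lmult[OF I _ lhR] by blast
        then show ?thesis unfolding polin_def using idl_0[OF I] by (simp add: coeff_monom)
      qed
      moreover have "lh * t * a ^ (k - n) \<in> adj R a"
        using srngD(4)[OF R1 srngD(4)[OF R1 sub_adj[OF R lhR] sub_adj[OF R t]] srng_pow[OF R1 aR]] .
      ultimately have dJ: "poly h a - poly h1 a \<in> J0 R I G a" unfolding diff J0_def by blast
      show ?thesis
      proof (cases "h1 = 0")
        case True
        then show ?thesis using dJ n1 polin_0[OF R] by (intro exI[of _ h1]) simp
      next
        case False
        then have "degree h1 < degree h" using h1d unfolding k_def by auto
        then obtain h' where h': "polin R h'" "degree h' < n" "poly h1 a - poly h' a \<in> J0 R I G a"
          using less.hyps ph1 by blast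
        have "poly h a - poly h' a = (poly h a - poly h1 a) + (poly h1 a - poly h' a)" by simp
        also have "\<dots> \<in> J0 R I G a" using idl_add[OF Jd dJ h'(3)] .
        finally show ?thesis using h' by blast
      qed
    qed
  qed
  define C1 where "C1 = (\<lambda>c. poly (\<Sum>i<n. monom (c i) i) a) ` ({..<n} \<rightarrow>\<^sub>E C)"
  have fC1: "finite C1" unfolding C1_def using C(1) by (simp add: finite_PiE)
  have C1sub: "C1 \<subseteq> adj R a"
  proof
    fix z assume "z \<in> C1"
    then obtain c where c: "c \<in> {..<n} \<rightarrow>\<^sub>E C" "z = poly (\<Sum>i<n. monom (c i) i) a" unfolding C1_def by blast
    have "polin R (\<Sum>i<n. monom (c i) i)" unfolding polin_def coeff_summonom
      using c(1) C(2) srngD(1)[OF R] by (auto simp: PiE_def Pi_def)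
    then show "z \<in> adj R a" using c(2) poly_in_adj by blast
  qed
  have step2: "\<exists>z\<in>C1. poly h' a - z \<in> J0 R I G a" if h': "polin R h'" "degree h' < n" for h'
  proof -
    define c where "c = restrict (\<lambda>i. SOME c. c \<in> C \<and> coeff h' i - c \<in> I) {..<n}"
    have cs: "c i \<in> C \<and> coeff h' i - c i \<in> I" if "i < n" for i
    proof -
      have "\<exists>c. c \<in> C \<and> coeff h' i - c \<in> I" using C(3)[of "coeff h' i"] h'(1) unfolding polin_def by blast
      then have "(SOME c. c \<in> C \<and> coeff h' i - c \<in> I) \<in> C \<and> coeff h' i - (SOME c. c \<in> C \<and> coeff h' i - c \<in> I) \<in> I"
        by (rule someI_ex)
      then show ?thesis unfolding c_def using that by simp
    qed
    have cP: "c \<in> {..<n} \<rightarrow>\<^sub>E C" unfolding c_def using cs[unfolded c_def] by auto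
    define P where "P = (\<Sum>i<n. monom (c i) i)"
    have "polin I (h' - P)"
      unfolding polin_def
    proof
      fix j show "coeff (h' - P) j \<in> I"
      proof (cases "j < n")
        case True then show ?thesis using cs[of j] unfolding P_def coeff_diff coeff_summonom by simp
      next
        case False
        then have "coeff h' j = 0" using h'(2) by (intro coeff_eq_0) simp
        then show ?thesis using False idl_0[OF I] unfolding P_def coeff_diff coeff_summonom by simp
      qed
    qed
    moreover have "poly h' a - poly P a = poly (h' - P) a + poly G a * 0" by simp
    moreover have "(0::'a) \<in> adj R a" using srngD(1)[OF R1] .
    ultimately have "poly h' a - poly P a \<in> J0 R I G a" unfolding J0_def by blast
    moreover have "poly P a \<in> C1" unfolding C1_def P_def using cP by blast
    ultimately show ?thesis by blast
  qed
  have "\<exists>z\<in>C1. r - z \<in> J0 R I G a" if rr: "r \<in> adj R a" for r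
  proof -
    obtain h where h: "polin R h" "r = poly h a" using rr unfolding adj_def by blast
    obtain h' where h': "polin R h'" "degree h' < n" "poly h a - poly h' a \<in> J0 R I G a" using step1[OF h(1)] by blast
    obtain z where z: "z \<in> C1" "poly h' a - z \<in> J0 R I G a" using step2[OF h'(1,2)] by blast
    have "r - z = (poly h a - poly h' a) + (poly h' a - z)" using h by simp
    also have "\<dots> \<in> J0 R I G a" using idl_add[OF Jd h'(3) z(2)] .
    finally show ?thesis using z(1) by blast
  qed
  then show ?thesis unfolding cofin_def using fC1 C1sub by blast
qed

lemma exmax:
  assumes R: "srng R" and Jz: "idl R Jz" "1 \<notin> Jz" "cofin R Jz"
  shows "\<exists>J. cmax R J \<and> Jz \<subseteq> J"
proof -
  obtain C where C: "finite C" "C \<subseteq> R" "\<And>r. r \<in> R \<Longrightarrow> \<exists>c\<in>C. r - c \<in> Jz" using Jz(3) unfolding cofin_def by blast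
  define Pr where "Pr J \<longleftrightarrow> idl R J \<and> Jz \<subseteq> J \<and> 1 \<notin> J" for J
  have "Pr Jz" unfolding Pr_def using Jz by blast
  moreover have "\<forall>J. Pr J \<longrightarrow> card (C \<inter> J) < Suc (card C)"
  proof (intro allI impI)
    fix J have "card (C \<inter> J) \<le> card C" using card_mono[OF C(1), of "C \<inter> J"] by blast
    then show "card (C \<inter> J) < Suc (card C)" by simp
  qed
  ultimately have "\<exists>J. Pr J \<and> (\<forall>J'. Pr J' \<longrightarrow> card (C \<inter> J') \<le> card (C \<inter> J))"
    by (rule ex_has_greatest_nat)
  then obtain J where J: "Pr J" and Jmax: "\<And>J'. Pr J' \<Longrightarrow> card (C \<inter> J') \<le> card (C \<inter> J)"
    by blast
  have Ji: "idl R J" "Jz \<subseteq> J" "1 \<notin> J" using J unfolding Pr_def by auto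
  have cJ: "cofin R J" unfolding cofin_def
  proof (intro exI[of _ C] conjI ballI)
    fix r assume "r \<in> R"
    then obtain c where "c \<in> C" "r - c \<in> Jz" using C(3) by blast
    then show "\<exists>c\<in>C. r - c \<in> J" using Ji(2) by blast
  qed (use C in auto)
  have mx: "\<exists>s\<in>R. r * s - 1 \<in> J" if r: "r \<in> R" "r \<notin> J" for r
  proof (rule ccontr)
    assume nex: "\<not> (\<exists>s\<in>R. r * s - 1 \<in> J)"
    define J' where "J' = {j + r * s | j s. j \<in> J \<and> s \<in> R}"
    have JJ': "J \<subseteq> J'"
    proof
      fix j assume jJ: "j \<in> J"
      have "j = j + r * 0" by simp
      then show "j \<in> J'" unfolding J'_def using srngD(1)[OF R] jJ by blast
    qed
    have idJ': "idl R J'"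
    proof -
      have "J' \<subseteq> R"
      proof
        fix x assume "x \<in> J'"
        then obtain j s where js: "x = j + r * s" "j \<in> J" "s \<in> R" unfolding J'_def by blast
        then show "x \<in> R" using idl_sub[OF Ji(1) js(2)] srngD(3)[OF R _ srngD(4)[OF R r(1) js(3)]] by simp
      qed
      moreover have "0 \<in> J'" using JJ' idl_0[OF Ji(1)] by blast
      moreover have "x + y \<in> J'" if xJ: "x \<in> J'" and yJ: "y \<in> J'" for x y
      proof -
        obtain j1 s1 where 1: "x = j1 + r * s1" "j1 \<in> J" "s1 \<in> R" using xJ unfolding J'_def by blast
        obtain j2 s2 where 2: "y = j2 + r * s2" "j2 \<in> J" "s2 \<in> R" using yJ unfolding J'_def by blast
        have "x + y = (j1 + j2) + r * (s1 + s2)" using 1 2 by (simp add: algebra_simps)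
        then show ?thesis unfolding J'_def using idl_add[OF Ji(1) 1(2) 2(2)] srngD(3)[OF R 1(3) 2(3)] by blast
      qed
      moreover have "q * x \<in> J'" if xJ: "x \<in> J'" and qR: "q \<in> R" for x q
      proof -
        obtain j1 s1 where 1: "x = j1 + r * s1" "j1 \<in> J" "s1 \<in> R" using xJ unfolding J'_def by blast
        have "q * x = q * j1 + r * (q * s1)" using 1 by (simp add: algebra_simps)
        then show ?thesis unfolding J'_def using idl_lmult[OF Ji(1) 1(2) qR] srngD(4)[OF R qR 1(3)] by blast
      qed
      ultimately show ?thesis unfolding idl_def by blast
    qed
    have n1: "1 \<notin> J'"
    proof
      assume "1 \<in> J'"
      then obtain j s where js: "1 = j + r * s" "j \<in> J" "s \<in> R" unfolding J'_def by blast
      have "r * s - 1 = - j" using js(1) by (simp add: algebra_simps)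
      then have "r * s - 1 \<in> J" using idl_neg[OF Ji(1) R js(2)] by simp
      then show False using nex js(3) by blast
    qed
    have "Pr J'" unfolding Pr_def using idJ' n1 JJ' Ji(2) by blast
    then have le: "card (C \<inter> J') \<le> card (C \<inter> J)" using Jmax by blast
    obtain c where c: "c \<in> C" "r - c \<in> Jz" using C(3)[OF r(1)] by blast
    have rcJ: "r - c \<in> J" using c(2) Ji(2) by blast
    have "c = - (r - c) + r * 1" by simp
    moreover have "- (r - c) \<in> J" using idl_neg[OF Ji(1) R rcJ] .
    ultimately have cJ': "c \<in> J'" unfolding J'_def using srngD(2)[OF R] by blast
    have cnJ: "c \<notin> J"
    proof
      assume "c \<in> J"
      then have "(r - c) + c \<in> J" using idl_add[OF Ji(1) rcJ] by blast
      then show False using r(2) by simp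
    qed
    have "C \<inter> J \<subset> C \<inter> J'" using JJ' c(1) cJ' cnJ by blast
    then have "card (C \<inter> J) < card (C \<inter> J')" using C(1) by (intro psubset_card_mono) auto
    then show False using le by simp
  qed
  have "cmax R J" unfolding cmax_def using Ji(1,3) cJ mx by blast
  then show ?thesis using Ji(2) by blast
qed

lemma build:
  assumes R: "srng R" and I: "cmax R I" and G: "polin R G" and dG: "degree G \<ge> 1"
    and t: "t \<in> R" and lt: "lead_coeff G * t - 1 \<in> I" and n1: "1 \<notin> J0 R I G a"
  shows "\<exists>J. cmax (adj R a) J \<and> J0 R I G a \<subseteq> J"
proof -
  have Ii: "idl R I" "cofin R I" using I unfolding cmax_def by auto
  show ?thesis
    by (rule exmax[OF srng_adj[OF R] J0_idl[OF R Ii(1) G] n1 J0_cofin[OF R Ii(1) Ii(2) G dG t lt]])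
qed

lemma step:
  assumes R: "srng R" and P: "PP R"
  shows "PP (adj R a)"
  unfolding PP_def
proof (intro ballI impI)
  fix x assume xA: "x \<in> adj R a" and x0: "x \<noteq> 0"
  obtain f where f: "polin R f" "x = poly f a" using xA unfolding adj_def by blast
  have R1: "srng (adj R a)" using srng_adj[OF R] .
  have aA: "a \<in> adj R a" using a_in_adj[OF R] .
  show "\<exists>J. cmax (adj R a) J \<and> x \<notin> J"
  proof (cases "\<forall>h. polin R h \<and> poly h a = 0 \<longrightarrow> h = 0")
    case True
    have f0: "f \<noteq> 0" using f x0 by auto
    define fd where "fd = lead_coeff f"
    have fdR: "fd \<in> R" using f(1) unfolding polin_def fd_def by auto
    have fd0: "fd \<noteq> 0" using f0 unfolding fd_def by simp
    obtain I where I: "cmax R I" "fd \<notin> I" using P fdR fd0 unfolding PP_def by blast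
    have Ii: "idl R I" "1 \<notin> I" using I(1) unfolding cmax_def by auto
    obtain t where t: "t \<in> R" "fd * t - 1 \<in> I" using I fdR unfolding cmax_def by blast
    define G where "G = monom t 1 * f - 1"
    define d where "d = degree f"
    have pG: "polin R G" unfolding G_def by (intro polin_diff polin_mult polin_monom polin_1 R t f)
    have cG: "coeff G (Suc d) = t * fd" unfolding G_def d_def fd_def
      by (simp add: coeff_monom_mult coeff_1)
    have t0: "t * fd \<noteq> 0"
    proof
      assume "t * fd = 0"
      then have "fd * t - 1 = - 1" by (simp add: mult.commute)
      then have "- 1 \<in> I" using t(2) by metis
      then have "- (- 1) \<in> I" using idl_neg[OF Ii(1) R] by blast
      then show False using Ii(2) by simp
    qed
    have "coeff G j = 0" if "j > Suc d" for j
      using that unfolding G_def d_def by (simp add: coeff_monom_mult coeff_1 coeff_eq_0)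
    then have "degree G \<le> Suc d" by (intro degree_le) auto
    moreover have "Suc d \<le> degree G" using cG t0 by (intro le_degree) simp
    ultimately have dG: "degree G = Suc d" by simp
    have lG: "lead_coeff G * 1 - 1 \<in> I" using dG cG t(2) by (simp add: mult.commute)
    have lGI: "lead_coeff G \<notin> I"
    proof
      assume "lead_coeff G \<in> I"
      then have "lead_coeff G - (lead_coeff G * 1 - 1) \<in> I" using idl_diff[OF Ii(1) R _ lG] by blast
      then show False using Ii(2) by simp
    qed
    have n1: "1 \<notin> J0 R I G a"
    proof
      assume "1 \<in> J0 R I G a"
      then obtain u y where uy: "1 = poly u a + poly G a * y" "polin I u" "y \<in> adj R a" unfolding J0_def by blast
      obtain k where k: "polin R k" "y = poly k a" using uy(3) unfolding adj_def by blast
      have pu: "polin R u" using polin_idl_sub[OF Ii(1) uy(2)] .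
      have "poly (1 - u - G * k) a = 1 - (poly u a + poly G a * y)" using k(2) by simp
      then have "poly (1 - u - G * k) a = 0" using uy(1) by simp
      moreover have "polin R (1 - u - G * k)" by (intro polin_diff polin_mult polin_1 R pu pG k(1))
      ultimately have "1 - u - G * k = 0" using True by blast
      then have Gk: "G * k = 1 - u" by (simp add: algebra_simps)
      have hi: "coeff (G * k) i \<in> I" if "i \<ge> 1" for i
      proof -
        have "coeff (G * k) i = - coeff u i" using that unfolding Gk by (simp add: coeff_1)
        then show ?thesis using idl_neg[OF Ii(1) R] uy(2) unfolding polin_def by simp
      qed
      have "coeff (G * k) 0 \<in> I"
        by (rule lemD[OF R Ii(1) _ pG k(1) lGI]) (use cmax_prime[OF R I(1)] dG hi in auto)
      then have "1 - coeff u 0 \<in> I" unfolding Gk by (simp add: coeff_1)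
      then have "(1 - coeff u 0) + coeff u 0 \<in> I" using idl_add[OF Ii(1)] uy(2) unfolding polin_def by blast
      then show False using Ii(2) by simp
    qed
    obtain J where J: "cmax (adj R a) J" "J0 R I G a \<subseteq> J"
      using build[OF R I(1) pG _ srngD(2)[OF R] lG n1] dG by auto
    have JI: "idl (adj R a) J" "1 \<notin> J" using J(1) unfolding cmax_def by auto
    have "x \<notin> J"
    proof
      assume xJ: "x \<in> J"
      have atA: "a * t \<in> adj R a" using srngD(4)[OF R1 aA sub_adj[OF R t(1)]] .
      have "x * (a * t) \<in> J" using idl_rmult[OF JI(1) xJ atA] .
      moreover have "poly G a \<in> J" using G_J0[OF R Ii(1)] J(2) by blast
      ultimately have "x * (a * t) - poly G a \<in> J" using idl_diff[OF JI(1) R1] by blast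
      moreover have "x * (a * t) - poly G a = 1" unfolding G_def f(2) by (simp add: poly_monom algebra_simps)
      ultimately show False using JI(2) by simp
    qed
    then show ?thesis using J(1) by blast
  next
    case False
    then have "\<exists>h. polin R h \<and> h \<noteq> 0 \<and> poly h a = 0" by blast
    then obtain h0 where "polin R h0 \<and> h0 \<noteq> 0 \<and> poly h0 a = 0" by blast
    then obtain g where g: "polin R g \<and> g \<noteq> 0 \<and> poly g a = 0"
      and gmin: "\<And>h. polin R h \<and> h \<noteq> 0 \<and> poly h a = 0 \<Longrightarrow> degree g \<le> degree h"
      using ex_has_least_nat[of "\<lambda>h. polin R h \<and> h \<noteq> 0 \<and> poly h a = 0" h0 degree] by blast
    have pg: "polin R g" "g \<noteq> 0" "poly g a = 0" using g by auto
    have dg: "degree g \<ge> 1"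
    proof (rule ccontr)
      assume "\<not> degree g \<ge> 1"
      then have "degree g = 0" by simp
      then have "[:coeff g 0:] = g" by (rule degree_0_id)
      then have "poly g a = poly [:coeff g 0:] a" by simp
      then have "poly g a = coeff g 0" by simp
      moreover have "coeff g 0 \<noteq> 0" using pg(2) \<open>degree g = 0\<close> leading_coeff_0_iff[of g] by simp
      ultimately show False using pg(3) by simp
    qed
    define c where "c = lead_coeff g"
    have cR: "c \<in> R" using pg(1) unfolding polin_def c_def by auto
    have c0: "c \<noteq> 0" using pg(2) unfolding c_def by simp
    obtain u0 e where ue: "polin R u0" "e \<in> R" "e \<noteq> 0" "poly u0 a * poly f a = e"
      using elem[OF R f(1) pg(1) pg(2) pg(3) _ ] gmin f(2) x0 by blast
    have ce: "c * e \<in> R" "c * e \<noteq> 0" using srngD(4)[OF R cR ue(2)] c0 ue(3) by auto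
    obtain I where I: "cmax R I" "c * e \<notin> I" using P ce unfolding PP_def by blast
    have Ii: "idl R I" "1 \<notin> I" using I(1) unfolding cmax_def by auto
    have cI: "c \<notin> I" using I(2) idl_rmult[OF Ii(1) _ ue(2)] by blast
    have eI: "e \<notin> I" using I(2) idl_lmult[OF Ii(1) _ cR] by blast
    obtain t where t: "t \<in> R" "c * t - 1 \<in> I" using I(1) cR cI unfolding cmax_def by blast
    have n1: "1 \<notin> J0 R I g a"
    proof
      assume "1 \<in> J0 R I g a"
      then obtain u y where uy: "1 = poly u a + poly g a * y" "polin I u" "y \<in> adj R a" unfolding J0_def by blast
      have pu: "polin R u" using polin_idl_sub[OF Ii(1) uy(2)] .
      have pz: "poly (1 - u) a = 0" using uy(1) pg(3) by simp
      have p1u: "polin R (1 - u)" by (intro polin_diff polin_1 R pu)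
      obtain m q r where mqr: "polin R q" "polin R r" "smult (c ^ m) (1 - u) = q * g + r" "r = 0 \<or> degree r < degree g"
        using pdiv[OF R pg(1) pg(2) p1u] unfolding c_def by blast
      have "poly r a = 0" using arg_cong[OF mqr(3), of "\<lambda>p. poly p a"] pz pg(3) by simp
      then have r0: "r = 0" using gmin[of r] mqr(2,4) by (cases "r = 0") auto
      then have gq: "g * q = smult (c ^ m) (1 - u)" using mqr(3) by (simp add: mult.commute)
      have cm: "c ^ m \<in> R" using srng_pow[OF R cR] .
      have hi: "coeff (g * q) i \<in> I" if "i \<ge> 1" for i
      proof -
        have "coeff (g * q) i = c ^ m * (- coeff u i)" using that unfolding gq by (simp add: coeff_1)
        then show ?thesis using idl_lmult[OF Ii(1) idl_neg[OF Ii(1) R] cm] uy(2) unfolding polin_def by simp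
      qed
      have "coeff (g * q) 0 \<in> I"
        by (rule lemD[OF R Ii(1) _ pg(1) mqr(1)]) (use cmax_prime[OF R I(1)] dg hi cI c_def in auto)
      then have "c ^ m * (1 - coeff u 0) \<in> I" unfolding gq by (simp add: coeff_1)
      moreover have "1 - coeff u 0 \<in> R" using pu srngD(2,6)[OF R] unfolding polin_def by blast
      moreover have "c ^ m \<notin> I" using cmax_pow[OF R I(1) cR cI] .
      ultimately have "1 - coeff u 0 \<in> I" using cmax_prime[OF R I(1) cm] by blast
      then have "(1 - coeff u 0) + coeff u 0 \<in> I" using idl_add[OF Ii(1)] uy(2) unfolding polin_def by blast
      then show False using Ii(2) by simp
    qed
    obtain J where J: "cmax (adj R a) J" "J0 R I g a \<subseteq> J"
      using build[OF R I(1) pg(1) dg t(1) _ n1] t(2) unfolding c_def by blast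
    have JI: "idl (adj R a) J" "1 \<notin> J" using J(1) unfolding cmax_def by auto
    have "x \<notin> J"
    proof
      assume xJ: "x \<in> J"
      have "e \<in> J" using idl_lmult[OF JI(1) xJ poly_in_adj[OF ue(1)]] ue(4) f(2) by simp
      obtain s where s: "s \<in> R" "e * s - 1 \<in> I" using I(1) ue(2) eI unfolding cmax_def by blast
      have "e * s - 1 \<in> J" using I_J0[OF R Ii(1) s(2)] J(2) by blast
      moreover have "e * s \<in> J" using idl_rmult[OF JI(1) \<open>e \<in> J\<close> sub_adj[OF R s(1)]] .
      ultimately have "e * s - (e * s - 1) \<in> J" using idl_diff[OF JI(1) R1] by blast
      then show False using JI(2) by simp
    qed
    then show ?thesis using J(1) by blast
  qed
qed

lemma srng_int: "srng (range (of_int :: int \<Rightarrow> 'k::field))"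
  unfolding srng_def by (auto simp: image_iff) (metis of_int_add of_int_mult of_int_minus of_int_0 of_int_1)+

definition Jp :: "int \<Rightarrow> 'k::field set" where
  "Jp p = {of_int k | k. p dvd k}"

lemma Jp_cmax:
  assumes p: "Factorial_Ring.prime p" and n1: "1 \<notin> (Jp p :: 'k::field set)"
  shows "cmax (range (of_int :: int \<Rightarrow> 'k)) (Jp p)"
proof -
  have p0: "p > 0" using p by (simp add: prime_gt_0_int)
  have idl: "idl (range (of_int :: int \<Rightarrow> 'k)) (Jp p)"
    unfolding idl_def Jp_def
  proof (intro conjI ballI)
    show "{of_int k | k. p dvd k} \<subseteq> range (of_int :: int \<Rightarrow> 'k)" by auto
    show "(0::'k) \<in> {of_int k | k. p dvd k}" by (intro CollectI exI[of _ 0]) simp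
  next
    fix x y :: 'k assume "x \<in> {of_int k | k. p dvd k}" "y \<in> {of_int k | k. p dvd k}"
    then obtain k1 k2 where "x = of_int k1" "p dvd k1" "y = of_int k2" "p dvd k2" by blast
    then show "x + y \<in> {of_int k | k. p dvd k}" by (intro CollectI exI[of _ "k1 + k2"]) auto
  next
    fix x r :: 'k assume "x \<in> {of_int k | k. p dvd k}" "r \<in> range of_int"
    then obtain k1 k2 where "x = of_int k1" "p dvd k1" "r = of_int k2" by blast
    then show "r * x \<in> {of_int k | k. p dvd k}" by (intro CollectI exI[of _ "k2 * k1"]) auto
  qed
  have cof: "cofin (range (of_int :: int \<Rightarrow> 'k)) (Jp p)"
    unfolding cofin_def
  proof (intro exI[of _ "of_int ` {0..<p}"] conjI ballI)
    fix r :: 'k assume "r \<in> range of_int"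
    then obtain k where k: "r = of_int k" by blast
    have "r - of_int (k mod p) = of_int (p * (k div p))" unfolding k
      by (metis minus_mod_eq_mult_div of_int_diff mult.commute)
    then have "r - of_int (k mod p) \<in> Jp p" unfolding Jp_def
      by (intro CollectI exI[of _ "p * (k div p)"]) simp
    moreover have "k mod p \<in> {0..<p}" using p0 by simp
    ultimately show "\<exists>c\<in>of_int ` {0..<p}. r - c \<in> Jp p" by blast
  qed auto
  have mx: "\<exists>s\<in>range of_int. r * s - 1 \<in> Jp p" if r: "r \<in> range (of_int :: int \<Rightarrow> 'k)" "r \<notin> Jp p" for r
  proof -
    obtain k where k: "r = of_int k" using r(1) by blast
    have "\<not> p dvd k" using r(2) unfolding k Jp_def by auto
    then have "coprime p k" by (intro prime_imp_coprime p)
    then have "gcd k p = 1" by (simp add: coprime_iff_gcd_eq_1 gcd.commute)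
    then obtain s v where sv: "s * k + v * p = 1" using bezout_int[of k p] by auto
    have cm: "s * k = k * s" "v * p = p * v" by (simp_all add: mult.commute)
    have ks: "k * s - 1 = p * (- v)" using sv cm by simp
    have "r * of_int s - 1 = of_int (k * s - 1)" unfolding k by simp
    then have "r * of_int s - 1 = of_int (p * (- v))" unfolding ks .
    then have "r * of_int s - 1 \<in> Jp p" unfolding Jp_def by (intro CollectI exI[of _ "p * (- v)"]) simp
    then show ?thesis by blast
  qed
  show ?thesis unfolding cmax_def using idl n1 cof mx by blast
qed

lemma of_nat_nz:
  assumes np: "\<forall>q::nat. Factorial_Ring.prime q \<longrightarrow> of_nat q \<noteq> (0::'k::field)"
  shows "n \<noteq> 0 \<Longrightarrow> of_nat n \<noteq> (0::'k)"
proof (induction n rule: less_induct)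
  case (less n)
  show ?case
  proof (cases "n = 1")
    case True then show ?thesis by simp
  next
    case False
    obtain q where q: "Factorial_Ring.prime q" "q dvd n" using prime_factor_nat[OF False] by blast
    obtain m where m: "n = q * m" using q(2) by blast
    have q1: "q > 1" using q(1) by (rule prime_gt_1_nat)
    have m0: "m \<noteq> 0" using less.prems m by auto
    have "m < n" using m q1 m0 by simp
    then have "of_nat m \<noteq> (0::'k)" using less.IH m0 by blast
    then show ?thesis using np q(1) m by simp
  qed
qed

lemma base: "PP (range (of_int :: int \<Rightarrow> 'k::field))"
  unfolding PP_def
proof (intro ballI impI)
  fix x :: 'k assume x: "x \<in> range of_int" "x \<noteq> 0"
  obtain m where m: "x = of_int m" using x(1) by blast
  show "\<exists>I. cmax (range of_int) I \<and> x \<notin> I"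
  proof (cases "\<exists>q::nat. Factorial_Ring.prime q \<and> of_nat q = (0::'k)")
    case True
    then obtain q :: nat where q: "Factorial_Ring.prime q" "of_nat q = (0::'k)" by blast
    define p where "p = int q"
    have p: "Factorial_Ring.prime p" using q(1) unfolding p_def by simp
    have z: "y = 0" if yJ: "y \<in> (Jp p :: 'k set)" for y
    proof -
      obtain k where "y = of_int k" "p dvd k" using yJ unfolding Jp_def by blast
      then obtain k' where "y = of_int (p * k')" by blast
      then show ?thesis using q(2) unfolding p_def by simp
    qed
    have "1 \<notin> (Jp p :: 'k set)"
    proof
      assume "(1::'k) \<in> Jp p"
      then have "(1::'k) = 0" by (rule z)
      then show False by simp
    qed
    moreover have "x \<notin> Jp p" using z x(2) by blast
    ultimately show ?thesis using Jp_cmax[OF p] by blast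
  next
    case False
    then have np: "\<forall>q::nat. Factorial_Ring.prime q \<longrightarrow> of_nat q \<noteq> (0::'k)" by blast
    have inj: "of_int k = (0::'k) \<Longrightarrow> k = 0" for k
    proof (rule ccontr)
      assume k: "of_int k = (0::'k)" "k \<noteq> 0"
      have "of_nat (nat \<bar>k\<bar>) = (of_int \<bar>k\<bar> :: 'k)" by simp
      also have "\<dots> = 0" using k(1) by (simp add: abs_if)
      finally show False using of_nat_nz[OF np, of "nat \<bar>k\<bar>"] k(2) by simp
    qed
    obtain q :: nat where q: "Factorial_Ring.prime q" "nat \<bar>m\<bar> < q" using bigger_prime by blast
    define p where "p = int q"
    have p: "Factorial_Ring.prime p" using q(1) unfolding p_def by simp
    have m0: "m \<noteq> 0" using x(2) m by auto
    have n1: "1 \<notin> (Jp p :: 'k set)"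
    proof
      assume "(1::'k) \<in> Jp p"
      then obtain k where k: "(1::'k) = of_int k" "p dvd k" unfolding Jp_def by blast
      then have "of_int (k - 1) = (0::'k)" by simp
      then have "k - 1 = 0" by (rule inj)
      then have "k = 1" by simp
      then have "is_unit p" using k(2) by simp
      then show False using p not_prime_unit by blast
    qed
    have "x \<notin> Jp p"
    proof
      assume "x \<in> Jp p"
      then obtain k where k: "x = of_int k" "p dvd k" unfolding Jp_def by blast
      then have "of_int (m - k) = (0::'k)" using m by simp
      then have "m - k = 0" by (rule inj)
      then have "m = k" by simp
      then have "p dvd m" using k(2) by simp
      then have "\<bar>p\<bar> \<le> \<bar>m\<bar>" using m0 dvd_imp_le_int by blast
      then show False using q(2) unfolding p_def by linarith
    qed
    then show ?thesis using Jp_cmax[OF p n1] by blast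
  qed
qed

fun rgen :: "'k::field list \<Rightarrow> 'k set" where
  "rgen [] = range of_int"
| "rgen (a # L) = adj (rgen L) a"

lemma rgen_props: "srng (rgen L) \<and> PP (rgen L) \<and> set L \<subseteq> rgen L"
proof (induction L)
  case Nil
  then show ?case using srng_int base by simp
next
  case (Cons a L)
  then have "set L \<subseteq> adj (rgen L) a" using sub_adj by blast
  then show ?case using Cons srng_adj[of "rgen L" a] step[of "rgen L" a] a_in_adj[of "rgen L" a] by simp
qed

lemma GL_carrier: "carrier (GL_rec p) = Units (Rec_monoid p)"
  unfolding GL_rec_def units_of_def by simp
lemma GL_mult: "x \<otimes>\<^bsub>GL_rec p\<^esub> y = rec_mult p x y"
  unfolding GL_rec_def units_of_def Rec_monoid_def by simp
lemma GL_one: "\<one>\<^bsub>GL_rec p\<^esub> = rec_id p"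
  unfolding GL_rec_def units_of_def Rec_monoid_def by simp
lemma Rec_simps: "carrier (Rec_monoid p) = {A. recognizable p A}" "x \<otimes>\<^bsub>Rec_monoid p\<^esub> y = rec_mult p x y"
  "\<one>\<^bsub>Rec_monoid p\<^esub> = rec_id p"
  unfolding Rec_monoid_def by simp_all

lemma words_valid: "U \<in> words p l \<Longrightarrow> V \<in> words p l \<Longrightarrow> valid_pair p U V"
  unfolding words_def valid_pair_def by auto

lemma valid_words: "valid_pair p U W \<Longrightarrow> U \<in> words p (length U) \<and> W \<in> words p (length U)"
  unfolding words_def valid_pair_def by auto

lemma finite_words: "finite (words p l)"
proof -
  have "words p l = {xs. set xs \<subseteq> {..<p} \<and> length xs = l}" unfolding words_def by auto
  then show ?thesis using finite_lists_length_eq[of "{..<p}" l] by simp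
qed

lemma rec_mult_words: "U \<in> words p l \<Longrightarrow> W \<in> words p l \<Longrightarrow>
   rec_mult p A B U W = (\<Sum>V\<in>words p l. A U V * B V W)"
  unfolding rec_mult_def using words_valid[of U p l W] by (simp add: words_def)

lemma rec_mult_assoc: "rec_mult p (rec_mult p A B) C = rec_mult p A (rec_mult p B C)"
proof (intro ext)
  fix U W
  show "rec_mult p (rec_mult p A B) C U W = rec_mult p A (rec_mult p B C) U W"
  proof (cases "valid_pair p U W")
    case True
    define l where "l = length U"
    have UW: "U \<in> words p l" "W \<in> words p l" using valid_words[OF True] unfolding l_def by auto
    have "rec_mult p (rec_mult p A B) C U W = (\<Sum>V\<in>words p l. (\<Sum>V'\<in>words p l. A U V' * B V' V) * C V W)"
      using UW by (simp add: rec_mult_words)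
    also have "\<dots> = (\<Sum>V\<in>words p l. \<Sum>V'\<in>words p l. A U V' * B V' V * C V W)"
      by (simp add: sum_distrib_right)
    also have "\<dots> = (\<Sum>V'\<in>words p l. \<Sum>V\<in>words p l. A U V' * B V' V * C V W)"
      by (rule sum.swap)
    also have "\<dots> = (\<Sum>V'\<in>words p l. A U V' * (\<Sum>V\<in>words p l. B V' V * C V W))"
      by (simp add: sum_distrib_left mult.assoc)
    also have "\<dots> = rec_mult p A (rec_mult p B C) U W"
      using UW by (simp add: rec_mult_words)
    finally show ?thesis .
  next
    case False
    then show ?thesis unfolding rec_mult_def by simp
  qed
qed

lemma rec_id_left: "is_pseries p A \<Longrightarrow> rec_mult p (rec_id p) A = A"
proof (intro ext)
  fix U W assume ps: "is_pseries p A"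
  show "rec_mult p (rec_id p) A U W = A U W"
  proof (cases "valid_pair p U W")
    case True
    define l where "l = length U"
    have UW: "U \<in> words p l" "W \<in> words p l" using valid_words[OF True] unfolding l_def by auto
    have "rec_mult p (rec_id p) A U W = (\<Sum>V\<in>words p l. rec_id p U V * A V W)"
      using UW by (simp add: rec_mult_words)
    also have "\<dots> = (\<Sum>V\<in>words p l. (if V = U then A V W else 0))"
      using UW words_valid[OF UW(1)] by (intro sum.cong refl) (auto simp: rec_id_def)
    also have "\<dots> = A U W" using UW(1) by (simp add: finite_words)
    finally show ?thesis .
  next
    case False
    then show ?thesis using ps unfolding rec_mult_def is_pseries_def by simp
  qed
qed

lemma rec_id_right: "is_pseries p A \<Longrightarrow> rec_mult p A (rec_id p) = A"
proof (intro ext)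
  fix U W assume ps: "is_pseries p A"
  show "rec_mult p A (rec_id p) U W = A U W"
  proof (cases "valid_pair p U W")
    case True
    define l where "l = length U"
    have UW: "U \<in> words p l" "W \<in> words p l" using valid_words[OF True] unfolding l_def by auto
    have "rec_mult p A (rec_id p) U W = (\<Sum>V\<in>words p l. A U V * rec_id p V W)"
      using UW by (simp add: rec_mult_words)
    also have "\<dots> = (\<Sum>V\<in>words p l. (if V = W then A U V else 0))"
      using UW words_valid[of _ p l W] by (intro sum.cong refl) (auto simp: rec_id_def)
    also have "\<dots> = A U W" using UW(2) by (simp add: finite_words)
    finally show ?thesis .
  next
    case False
    then show ?thesis using ps unfolding rec_mult_def is_pseries_def by simp
  qed
qed

lemma GL_pseries: assumes "A \<in> carrier (GL_rec p)" shows "is_pseries p A"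
proof -
  have "A \<in> carrier (Rec_monoid p)" using assms unfolding GL_carrier Units_def by blast
  then show ?thesis unfolding Rec_simps recognizable_def by blast
qed

lemma GL_inv:
  assumes A: "A \<in> carrier (GL_rec p)"
  shows "inv\<^bsub>GL_rec p\<^esub> A \<in> carrier (GL_rec p) \<and> rec_mult p (inv\<^bsub>GL_rec p\<^esub> A) A = rec_id p
     \<and> rec_mult p A (inv\<^bsub>GL_rec p\<^esub> A) = rec_id p"
proof -
  have "\<exists>B\<in>carrier (Rec_monoid p). B \<otimes>\<^bsub>Rec_monoid p\<^esub> A = \<one>\<^bsub>Rec_monoid p\<^esub> \<and> A \<otimes>\<^bsub>Rec_monoid p\<^esub> B = \<one>\<^bsub>Rec_monoid p\<^esub>"
    using A unfolding GL_carrier Units_def by blast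
  then obtain B where B: "B \<in> carrier (Rec_monoid p)" "rec_mult p B A = rec_id p" "rec_mult p A B = rec_id p"
    unfolding Rec_simps(2,3) by blast
  have Ac: "A \<in> carrier (Rec_monoid p)" using A unfolding GL_carrier Units_def by blast
  have "B \<in> Units (Rec_monoid p)" unfolding Units_def Rec_simps(2,3)
    using B Ac by blast
  then have BU: "B \<in> carrier (GL_rec p)" unfolding GL_carrier .
  have P: "B \<in> carrier (GL_rec p) \<and> A \<otimes>\<^bsub>GL_rec p\<^esub> B = \<one>\<^bsub>GL_rec p\<^esub> \<and> B \<otimes>\<^bsub>GL_rec p\<^esub> A = \<one>\<^bsub>GL_rec p\<^esub>"
    using BU B unfolding GL_mult GL_one by simp
  have uniq: "y = B" if y: "y \<in> carrier (GL_rec p) \<and> A \<otimes>\<^bsub>GL_rec p\<^esub> y = \<one>\<^bsub>GL_rec p\<^esub> \<and> y \<otimes>\<^bsub>GL_rec p\<^esub> A = \<one>\<^bsub>GL_rec p\<^esub>" for y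
  proof -
    have yp: "is_pseries p y" using y GL_pseries by blast
    have Bp: "is_pseries p B" using BU GL_pseries by blast
    have "y = rec_mult p y (rec_id p)" using rec_id_right[OF yp] by simp
    also have "\<dots> = rec_mult p y (rec_mult p A B)" using B by simp
    also have "\<dots> = rec_mult p (rec_mult p y A) B" by (rule rec_mult_assoc[symmetric])
    also have "\<dots> = rec_mult p (rec_id p) B" using y unfolding GL_mult GL_one by simp
    also have "\<dots> = B" using rec_id_left[OF Bp] .
    finally show ?thesis .
  qed
  have "inv\<^bsub>GL_rec p\<^esub> A = B" unfolding m_inv_def
    by (rule the_equality[where a = B], rule P, erule uniq)
  then show ?thesis using BU B by simp
qed

lemma level:
  assumes ps: "is_pseries p A" and ne: "A \<noteq> rec_id p"
  shows "\<exists>l U V. U \<in> words p l \<and> V \<in> words p l \<and> A U V \<noteq> (if U = V then 1 else 0)"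
proof -
  obtain U V where UV: "A U V \<noteq> rec_id p U V" using ne by (meson ext)
  have vp: "valid_pair p U V"
  proof (rule ccontr)
    assume nv: "\<not> valid_pair p U V"
    then have "A U V = 0" using ps unfolding is_pseries_def by auto
    then show False using UV nv unfolding rec_id_def by simp
  qed
  then have e: "rec_id p U V = (if U = V then 1 else 0)" unfolding rec_id_def by simp
  have "A U V \<noteq> (if U = V then 1 else 0)" by (subst e[symmetric]) (rule UV)
  then show ?thesis using valid_words[OF vp] by blast
qed

lemma natify:
  fixes G :: "('a, 'b) monoid_scheme"
  assumes G: "group G" and fin: "finite (carrier G)" and g: "x \<in> carrier G" "x \<noteq> \<one>\<^bsub>G\<^esub>"
  shows "\<exists>(H :: nat monoid) b. group H \<and> finite (carrier H) \<and> b \<in> hom G H \<and> b x \<noteq> \<one>\<^bsub>H\<^esub>"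
proof -
  obtain b where b: "bij_betw b (carrier G) {0..<card (carrier G)}" using ex_bij_betw_finite_nat[OF fin] by blast
  define b' where "b' = the_inv_into (carrier G) b"
  have bb': "b' (b y) = y" if "y \<in> carrier G" for y
    unfolding b'_def using b that by (simp add: bij_betw_def the_inv_into_f_f)
  define H where "H = \<lparr>carrier = {0..<card (carrier G)}, monoid.mult = (\<lambda>u v. b (b' u \<otimes>\<^bsub>G\<^esub> b' v)), one = b \<one>\<^bsub>G\<^esub>\<rparr>"
  have hom: "b \<in> hom G H"
    unfolding hom_def H_def using b bb' group.subgroup_self[OF G] 
    by (auto simp: bij_betw_def monoid.m_closed[OF group.is_monoid[OF G]])
  have iso: "b \<in> iso G H" unfolding iso_def using hom b unfolding H_def by simp
  have "group (H\<lparr>one := b \<one>\<^bsub>G\<^esub>\<rparr>)" using group.iso_imp_img_group[OF G iso] .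
  moreover have "H\<lparr>one := b \<one>\<^bsub>G\<^esub>\<rparr> = H" unfolding H_def by simp
  ultimately have gH: "group H" by simp
  have "b x \<noteq> b \<one>\<^bsub>G\<^esub>" using b g group.is_monoid[OF G] unfolding bij_betw_def inj_on_def
    by (metis monoid.one_closed)
  then have "b x \<noteq> \<one>\<^bsub>H\<^esub>" unfolding H_def by simp
  moreover have "finite (carrier H)" unfolding H_def by simp
  ultimately show ?thesis using gH hom by blast
qed

lemma RF_from:
  fixes G :: "('a, 'b) monoid_scheme" and T :: "'c itself"
  assumes "\<And>g. g \<in> carrier G \<Longrightarrow> g \<noteq> \<one>\<^bsub>G\<^esub> \<Longrightarrow>
     \<exists>(H' :: 'c monoid) h. group H' \<and> finite (carrier H') \<and> h \<in> hom G H' \<and> h g \<noteq> \<one>\<^bsub>H'\<^esub>"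
  shows "residually_finite G"
  unfolding residually_finite_def
proof (intro ballI impI)
  fix g assume g: "g \<in> carrier G" "g \<noteq> \<one>\<^bsub>G\<^esub>"
  obtain H' :: "'c monoid" and h where H': "group H'" "finite (carrier H')" "h \<in> hom G H'" "h g \<noteq> \<one>\<^bsub>H'\<^esub>"
    using assms[OF g] by blast
  have hg: "h g \<in> carrier H'" using H'(3) g(1) unfolding hom_def by auto
  obtain H :: "nat monoid" and b where H: "group H" "finite (carrier H)" "b \<in> hom H' H" "b (h g) \<noteq> \<one>\<^bsub>H\<^esub>"
    using natify[OF H'(1,2) hg H'(4)] by blast
  have "(b \<circ> h) \<in> hom G H" using H'(3) H(3) unfolding hom_def by (auto simp: Pi_def)
  then show "\<exists>(H :: nat monoid) h. group H \<and> finite (carrier H) \<and> h \<in> hom G H \<and> h g \<noteq> \<one>\<^bsub>H\<^esub>"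
    using H by (intro exI[of _ H] exI[of _ "b \<circ> h"]) simp
qed

definition vecs :: "nat \<Rightarrow> nat \<Rightarrow> 'k::field set \<Rightarrow> (nat list \<Rightarrow> 'k) set" where
  "vecs p l R = {v. (\<forall>U\<in>words p l. v U \<in> R) \<and> (\<forall>U. U \<notin> words p l \<longrightarrow> v U = 0)}"
definition mv :: "nat \<Rightarrow> nat \<Rightarrow> (nat list \<Rightarrow> nat list \<Rightarrow> 'k::field) \<Rightarrow> (nat list \<Rightarrow> 'k) \<Rightarrow> (nat list \<Rightarrow> 'k)" where
  "mv p l A v = (\<lambda>U. if U \<in> words p l then (\<Sum>V\<in>words p l. A U V * v V) else 0)"
definition rel :: "nat \<Rightarrow> nat \<Rightarrow> 'k::field set \<Rightarrow> (nat list \<Rightarrow> 'k) \<Rightarrow> (nat list \<Rightarrow> 'k) \<Rightarrow> bool" where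
  "rel p l I v w \<longleftrightarrow> (\<forall>U\<in>words p l. v U - w U \<in> I)"
definition cls :: "nat \<Rightarrow> nat \<Rightarrow> 'k::field set \<Rightarrow> 'k set \<Rightarrow> (nat list \<Rightarrow> 'k) \<Rightarrow> (nat list \<Rightarrow> 'k) set" where
  "cls p l R I v = {w \<in> vecs p l R. rel p l I v w}"
definition Xs :: "nat \<Rightarrow> nat \<Rightarrow> 'k::field set \<Rightarrow> 'k set \<Rightarrow> (nat list \<Rightarrow> 'k) set set" where
  "Xs p l R I = cls p l R I ` vecs p l R"
definition act :: "nat \<Rightarrow> nat \<Rightarrow> 'k::field set \<Rightarrow> 'k set \<Rightarrow> (nat list \<Rightarrow> nat list \<Rightarrow> 'k) \<Rightarrow> (nat list \<Rightarrow> 'k) set \<Rightarrow> (nat list \<Rightarrow> 'k) set" where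
  "act p l R I A Q = {w \<in> vecs p l R. \<exists>v\<in>Q. rel p l I (mv p l A v) w}"
definition ent :: "nat \<Rightarrow> nat \<Rightarrow> 'k::field set \<Rightarrow> (nat list \<Rightarrow> nat list \<Rightarrow> 'k) \<Rightarrow> bool" where
  "ent p l R A \<longleftrightarrow> (\<forall>U\<in>words p l. \<forall>V\<in>words p l. A U V \<in> R)"

context
  fixes p l :: nat and R I :: "'k::field set"
  assumes R: "srng R" and I: "idl R I"
begin

lemma rel_refl: "rel p l I v v"
  unfolding rel_def using idl_0[OF I] by simp

lemma rel_sym: assumes "rel p l I v w" shows "rel p l I w v"
  unfolding rel_def
proof
  fix U assume "U \<in> words p l"
  then have "- (v U - w U) \<in> I" using assms idl_neg[OF I R] unfolding rel_def by blast
  then show "w U - v U \<in> I" by simp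
qed

lemma rel_trans: assumes "rel p l I u v" "rel p l I v w" shows "rel p l I u w"
  unfolding rel_def
proof
  fix U assume "U \<in> words p l"
  then have "(u U - v U) + (v U - w U) \<in> I" using assms idl_add[OF I] unfolding rel_def by blast
  then show "u U - w U \<in> I" by simp
qed

lemma cls_eq: "rel p l I v w \<Longrightarrow> cls p l R I v = cls p l R I w"
  unfolding cls_def using rel_sym rel_trans by blast

lemma mem_cls: "v \<in> vecs p l R \<Longrightarrow> v \<in> cls p l R I v"
  unfolding cls_def using rel_refl by blast

lemma cls_eqD: "w \<in> vecs p l R \<Longrightarrow> cls p l R I v = cls p l R I w \<Longrightarrow> rel p l I v w"
  using mem_cls[of w] unfolding cls_def by blast

lemma mv_vecs: "ent p l R A \<Longrightarrow> v \<in> vecs p l R \<Longrightarrow> mv p l A v \<in> vecs p l R"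
  unfolding vecs_def mv_def ent_def
  by (auto intro!: srng_sum[OF R] srngD(4)[OF R])

lemma mv_rel:
  assumes A: "ent p l R A" and vw: "rel p l I v w"
  shows "rel p l I (mv p l A v) (mv p l A w)"
  unfolding rel_def
proof
  fix U assume U: "U \<in> words p l"
  have "mv p l A v U - mv p l A w U = (\<Sum>V\<in>words p l. A U V * (v V - w V))"
    using U unfolding mv_def by (simp add: sum_subtractf right_diff_distrib)
  also have "\<dots> \<in> I"
    using A U vw unfolding ent_def rel_def by (intro idl_sum[OF I] idl_lmult[OF I]) auto
  finally show "mv p l A v U - mv p l A w U \<in> I" .
qed

lemma act_cls:
  assumes A: "ent p l R A" and v: "v \<in> vecs p l R"
  shows "act p l R I A (cls p l R I v) = cls p l R I (mv p l A v)"
proof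
  show "act p l R I A (cls p l R I v) \<subseteq> cls p l R I (mv p l A v)"
  proof
    fix w assume "w \<in> act p l R I A (cls p l R I v)"
    then obtain v' where w: "w \<in> vecs p l R" "v' \<in> cls p l R I v" "rel p l I (mv p l A v') w"
      unfolding act_def by blast
    have "rel p l I v v'" using w(2) unfolding cls_def by blast
    then have "rel p l I (mv p l A v) (mv p l A v')" using mv_rel[OF A] by blast
    then have "rel p l I (mv p l A v) w" using rel_trans w(3) by blast
    then show "w \<in> cls p l R I (mv p l A v)" unfolding cls_def using w(1) by blast
  qed
  show "cls p l R I (mv p l A v) \<subseteq> act p l R I A (cls p l R I v)"
    unfolding act_def cls_def using mem_cls[OF v] unfolding cls_def by blast
qed

lemma mv_mult:
  assumes v: "v \<in> vecs p l R"
  shows "mv p l (rec_mult p A B) v = mv p l A (mv p l B v)"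
proof
  fix U
  show "mv p l (rec_mult p A B) v U = mv p l A (mv p l B v) U"
  proof (cases "U \<in> words p l")
    case True
    have "mv p l (rec_mult p A B) v U = (\<Sum>W\<in>words p l. (\<Sum>V\<in>words p l. A U V * B V W) * v W)"
      using True unfolding mv_def by (simp add: rec_mult_words)
    also have "\<dots> = (\<Sum>W\<in>words p l. \<Sum>V\<in>words p l. A U V * B V W * v W)"
      by (simp add: sum_distrib_right)
    also have "\<dots> = (\<Sum>V\<in>words p l. \<Sum>W\<in>words p l. A U V * B V W * v W)"
      by (rule sum.swap)
    also have "\<dots> = (\<Sum>V\<in>words p l. A U V * (\<Sum>W\<in>words p l. B V W * v W))"
      by (simp add: sum_distrib_left mult.assoc)
    also have "\<dots> = mv p l A (mv p l B v) U"
      using True unfolding mv_def by simp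
    finally show ?thesis .
  next
    case False
    then show ?thesis unfolding mv_def by simp
  qed
qed

lemma mv_id:
  assumes v: "v \<in> vecs p l R"
  shows "mv p l (rec_id p) v = v"
proof
  fix U
  show "mv p l (rec_id p) v U = v U"
  proof (cases "U \<in> words p l")
    case True
    have "mv p l (rec_id p) v U = (\<Sum>V\<in>words p l. if V = U then v V else 0)"
      unfolding mv_def using True words_valid[OF True] by (simp add: rec_id_def) (intro sum.cong refl, auto)
    also have "\<dots> = v U" using True by (simp add: finite_words)
    finally show ?thesis .
  next
    case False
    then show ?thesis using v unfolding mv_def vecs_def by simp
  qed
qed

lemma finite_Xs:
  assumes cI: "cofin R I"
  shows "finite (Xs p l R I)"
proof -
  obtain C where C: "finite C" "C \<subseteq> R" "\<And>r. r \<in> R \<Longrightarrow> \<exists>c\<in>C. r - c \<in> I" using cI unfolding cofin_def by blast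
  define ext where "ext f = (\<lambda>U. if U \<in> words p l then f U else 0)" for f :: "nat list \<Rightarrow> 'k"
  define Reps where "Reps = ext ` (words p l \<rightarrow>\<^sub>E C)"
  have fR: "finite Reps" unfolding Reps_def using C(1) finite_words by (simp add: finite_PiE)
  have "Xs p l R I \<subseteq> cls p l R I ` Reps"
  proof
    fix Q assume "Q \<in> Xs p l R I"
    then obtain v where v: "v \<in> vecs p l R" "Q = cls p l R I v" unfolding Xs_def by blast
    define f where "f = restrict (\<lambda>U. SOME c. c \<in> C \<and> v U - c \<in> I) (words p l)"
    have fs: "f U \<in> C \<and> v U - f U \<in> I" if U: "U \<in> words p l" for U
    proof -
      have "\<exists>c. c \<in> C \<and> v U - c \<in> I" using C(3)[of "v U"] v(1) U unfolding vecs_def by blast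
      then have "(SOME c. c \<in> C \<and> v U - c \<in> I) \<in> C \<and> v U - (SOME c. c \<in> C \<and> v U - c \<in> I) \<in> I"
        by (rule someI_ex)
      then show ?thesis unfolding f_def using U by simp
    qed
    have fP: "f \<in> words p l \<rightarrow>\<^sub>E C" using fs unfolding f_def by auto
    have "rel p l I v (ext f)" unfolding rel_def ext_def using fs by simp
    then have "Q = cls p l R I (ext f)" using cls_eq v(2) by simp
    moreover have "ext f \<in> Reps" unfolding Reps_def using fP by blast
    ultimately show "Q \<in> cls p l R I ` Reps" by blast
  qed
  then show ?thesis using fR finite_subset by blast
qed

end

lemma ent_mult: "srng R \<Longrightarrow> ent p l R A \<Longrightarrow> ent p l R B \<Longrightarrow> ent p l R (rec_mult p A B)"
  unfolding ent_def by (auto simp: rec_mult_words intro!: srng_sum srngD(4))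

lemma core:
  fixes \<Gamma> :: "(nat list \<Rightarrow> nat list \<Rightarrow> 'k::field) set"
  assumes R: "srng R" and I: "idl R I" and cI: "cofin R I"
    and Gsub: "\<Gamma> \<subseteq> carrier (GL_rec p)"
    and Ginv: "\<And>A. A \<in> \<Gamma> \<Longrightarrow> inv\<^bsub>GL_rec p\<^esub> A \<in> \<Gamma>"
    and ent: "\<And>A. A \<in> \<Gamma> \<Longrightarrow> ent p l R A"
    and g: "g \<in> \<Gamma>" and U0: "U0 \<in> words p l" and V0: "V0 \<in> words p l"
    and gx: "g U0 V0 - (if U0 = V0 then 1 else 0) \<notin> I"
  shows "\<exists>(H' :: ((nat list \<Rightarrow> 'k) set \<Rightarrow> (nat list \<Rightarrow> 'k) set) monoid) h. group H' \<and> finite (carrier H')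
     \<and> h \<in> hom ((GL_rec p)\<lparr>carrier := \<Gamma>\<rparr>) H' \<and> h g \<noteq> \<one>\<^bsub>H'\<^esub>"
proof -
  define XX where "XX = Xs p l R I"
  define h where "h A = restrict (act p l R I A) XX" for A
  have Xcls: "\<exists>v\<in>vecs p l R. Q = cls p l R I v" if "Q \<in> XX" for Q using that unfolding XX_def Xs_def by blast
  have actX: "act p l R I A Q \<in> XX" if A: "ent p l R A" and Q: "Q \<in> XX" for A Q
  proof -
    obtain v where v: "v \<in> vecs p l R" "Q = cls p l R I v" using Xcls[OF Q] by blast
    show ?thesis using act_cls[OF R I A v(1)] mv_vecs[OF R I A v(1)] v(2) unfolding XX_def Xs_def by simp
  qed
  have actmult: "act p l R I (rec_mult p A B) Q = act p l R I A (act p l R I B Q)"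
    if A: "ent p l R A" and B: "ent p l R B" and Q: "Q \<in> XX" for A B Q
  proof -
    obtain v where v: "v \<in> vecs p l R" "Q = cls p l R I v" using Xcls[OF Q] by blast
    have "act p l R I (rec_mult p A B) Q = cls p l R I (mv p l (rec_mult p A B) v)"
      using act_cls[OF R I ent_mult[OF R A B] v(1)] v(2) by simp
    also have "\<dots> = cls p l R I (mv p l A (mv p l B v))" using mv_mult[OF R I v(1)] by simp
    also have "\<dots> = act p l R I A (cls p l R I (mv p l B v))" using act_cls[OF R I A mv_vecs[OF R I B v(1)]] by simp
    also have "\<dots> = act p l R I A (act p l R I B Q)" using act_cls[OF R I B v(1)] v(2) by simp
    finally show ?thesis .
  qed
  have actid: "act p l R I (rec_id p) Q = Q" if Q: "Q \<in> XX" for Q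
  proof -
    obtain v where v: "v \<in> vecs p l R" "Q = cls p l R I v" using Xcls[OF Q] by blast
    have eid: "ent p l R (rec_id p)" unfolding ent_def rec_id_def using srngD(1,2)[OF R] by auto
    show ?thesis using act_cls[OF R I eid v(1)] mv_id[OF R I v(1)] v(2) by simp
  qed
  have inv_back: "act p l R I B (act p l R I A Q) = Q" if "A \<in> \<Gamma>" "B \<in> \<Gamma>" "rec_mult p B A = rec_id p" "Q \<in> XX" for A B Q
    using actmult[OF ent[OF that(2)] ent[OF that(1)] that(4)] actid[OF that(4)] that(3) by simp
  have hBij: "h A \<in> Bij XX" if A: "A \<in> \<Gamma>" for A
  proof -
    define B where "B = inv\<^bsub>GL_rec p\<^esub> A"
    have B: "B \<in> \<Gamma>" "rec_mult p B A = rec_id p" "rec_mult p A B = rec_id p"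
      using Ginv[OF A] GL_inv[of A p] Gsub A unfolding B_def by auto
    have "bij_betw (act p l R I A) XX XX"
      by (rule bij_betw_byWitness[where f' = "act p l R I B"])
        (use inv_back[OF A B(1) B(2)] inv_back[OF B(1) A B(3)] actX[OF ent[OF A]] actX[OF ent[OF B(1)]] in auto)
    then have "bij_betw (h A) XX XX" unfolding h_def by (simp add: bij_betw_restrict_eq)
    then show ?thesis unfolding Bij_def h_def by simp
  qed
  have hom: "h \<in> hom ((GL_rec p)\<lparr>carrier := \<Gamma>\<rparr>) (BijGroup XX)"
    unfolding hom_def
  proof (intro CollectI conjI ballI)
    show "h \<in> carrier (GL_rec p\<lparr>carrier := \<Gamma>\<rparr>) \<rightarrow> carrier (BijGroup XX)"
      using hBij by (simp add: BijGroup_def)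
  next
    fix A B assume A: "A \<in> carrier (GL_rec p\<lparr>carrier := \<Gamma>\<rparr>)" and B: "B \<in> carrier (GL_rec p\<lparr>carrier := \<Gamma>\<rparr>)"
    then have A': "A \<in> \<Gamma>" and B': "B \<in> \<Gamma>" by simp_all
    have "h (A \<otimes>\<^bsub>GL_rec p\<lparr>carrier := \<Gamma>\<rparr>\<^esub> B) = h (rec_mult p A B)" by (simp add: GL_mult)
    also have "\<dots> = compose XX (h A) (h B)"
    proof
      fix Q
      show "h (rec_mult p A B) Q = compose XX (h A) (h B) Q"
      proof (cases "Q \<in> XX")
        case True
        then show ?thesis unfolding h_def compose_def
          using actmult[OF ent[OF A'] ent[OF B'] True] actX[OF ent[OF B'] True] by simp
      next
        case False
        then show ?thesis unfolding h_def compose_def by simp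
      qed
    qed
    also have "\<dots> = h A \<otimes>\<^bsub>BijGroup XX\<^esub> h B"
      using hBij[OF A'] hBij[OF B'] by (simp add: BijGroup_def)
    finally show "h (A \<otimes>\<^bsub>GL_rec p\<lparr>carrier := \<Gamma>\<rparr>\<^esub> B) = h A \<otimes>\<^bsub>BijGroup XX\<^esub> h B" .
  qed
  have finX: "finite XX" unfolding XX_def using finite_Xs[OF R I cI] .
  have finB: "finite (carrier (BijGroup XX))"
  proof -
    have "carrier (BijGroup XX) \<subseteq> XX \<rightarrow>\<^sub>E XX"
    proof
      fix f assume "f \<in> carrier (BijGroup XX)"
      then have "f \<in> Bij XX" by (simp add: BijGroup_def)
      then have f: "f \<in> extensional XX" "bij_betw f XX XX" unfolding Bij_def by blast+
      have "\<forall>x\<in>XX. f x \<in> XX" using bij_betwE[OF f(2)] by blast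
      then show "f \<in> XX \<rightarrow>\<^sub>E XX" using f(1) by (simp add: PiE_iff)
    qed
    moreover have "finite (XX \<rightarrow>\<^sub>E XX)" using finite_PiE[OF finX, of "\<lambda>_. XX"] finX by blast
    ultimately show ?thesis by (rule finite_subset)
  qed
  define e where "e = (\<lambda>U. if U = V0 then (1::'k) else 0)"
  have ev: "e \<in> vecs p l R" unfolding vecs_def e_def using V0 srngD(1,2)[OF R] by auto
  have QX: "cls p l R I e \<in> XX" unfolding XX_def Xs_def using ev by blast
  have "mv p l g e U0 = (\<Sum>V\<in>words p l. if V = V0 then g U0 V else 0)"
    unfolding mv_def e_def using U0 by (simp add: if_distrib cong: if_cong)
  also have "\<dots> = g U0 V0" using V0 by (simp add: finite_words)
  finally have mge: "mv p l g e U0 = g U0 V0" .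
  have "h g (cls p l R I e) \<noteq> cls p l R I e"
  proof
    assume "h g (cls p l R I e) = cls p l R I e"
    then have "cls p l R I (mv p l g e) = cls p l R I e"
      unfolding h_def using QX act_cls[OF R I ent[OF g] ev] by simp
    then have "rel p l I (mv p l g e) e" using cls_eqD[OF R I ev] by blast
    then have "mv p l g e U0 - e U0 \<in> I" using U0 unfolding rel_def by blast
    then show False using gx mge unfolding e_def by (simp split: if_splits)
  qed
  then have "h g \<noteq> \<one>\<^bsub>BijGroup XX\<^esub>" using QX by (auto simp: BijGroup_def)
  then show ?thesis using group_BijGroup[of XX] finB hom by blast
qed

theorem mainTheorem13:
  fixes p :: nat
  shows "(finite (UNIV :: 'k::field set) \<longrightarrow> residually_finite (GL_rec p :: (nat list \<Rightarrow> nat list \<Rightarrow> 'k) monoid))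
    \<and> (\<forall>(\<Gamma> :: (nat list \<Rightarrow> nat list \<Rightarrow> 'k) set) S.
          subgroup \<Gamma> (GL_rec p) \<and> finite S \<and> S \<subseteq> carrier (GL_rec p)
          \<and> \<Gamma> = generate (GL_rec p) S
        \<longrightarrow> residually_finite ((GL_rec p) \<lparr>carrier := \<Gamma>\<rparr>))"
proof (intro conjI impI allI)
  assume fin: "finite (UNIV :: 'k set)"
  have R: "srng (UNIV :: 'k set)" unfolding srng_def by simp
  have I: "idl (UNIV :: 'k set) {0}" unfolding idl_def by simp
  have cI: "cofin (UNIV :: 'k set) {0}" unfolding cofin_def using fin by (intro exI[of _ UNIV]) auto
  have "residually_finite ((GL_rec p :: (nat list \<Rightarrow> nat list \<Rightarrow> 'k) monoid)\<lparr>carrier := carrier (GL_rec p)\<rparr>)"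
  proof (rule RF_from)
    fix g assume g: "g \<in> carrier ((GL_rec p :: (nat list \<Rightarrow> nat list \<Rightarrow> 'k) monoid)\<lparr>carrier := carrier (GL_rec p)\<rparr>)"
      "g \<noteq> \<one>\<^bsub>(GL_rec p :: (nat list \<Rightarrow> nat list \<Rightarrow> 'k) monoid)\<lparr>carrier := carrier (GL_rec p)\<rparr>\<^esub>"
    then have g': "g \<in> carrier (GL_rec p)" "g \<noteq> rec_id p" by (simp_all add: GL_one)
    obtain l U0 V0 where lv: "U0 \<in> words p l" "V0 \<in> words p l" "g U0 V0 \<noteq> (if U0 = V0 then 1 else 0)"
      using level[OF GL_pseries[OF g'(1)] g'(2)] by blast
    have gx: "g U0 V0 - (if U0 = V0 then 1 else 0) \<notin> {0}" using lv(3) by simp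
    show "\<exists>(H' :: ((nat list \<Rightarrow> 'k) set \<Rightarrow> (nat list \<Rightarrow> 'k) set) monoid) h. group H' \<and> finite (carrier H')
     \<and> h \<in> hom ((GL_rec p)\<lparr>carrier := carrier (GL_rec p)\<rparr>) H' \<and> h g \<noteq> \<one>\<^bsub>H'\<^esub>"
      by (rule core[OF R I cI _ _ _ g'(1) lv(1,2) gx])
        (auto simp: GL_inv ent_def)
  qed
  then show "residually_finite (GL_rec p :: (nat list \<Rightarrow> nat list \<Rightarrow> 'k) monoid)" by simp
next
  fix \<Gamma> :: "(nat list \<Rightarrow> nat list \<Rightarrow> 'k) set" and S
  assume asm: "subgroup \<Gamma> (GL_rec p) \<and> finite S \<and> S \<subseteq> carrier (GL_rec p) \<and> \<Gamma> = generate (GL_rec p) S"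
  have sg: "subgroup \<Gamma> (GL_rec p)" and fS: "finite S" and SG: "S \<subseteq> carrier (GL_rec p)"
    and Gam: "\<Gamma> = generate (GL_rec p) S" using asm by auto
  show "residually_finite ((GL_rec p) \<lparr>carrier := \<Gamma>\<rparr>)"
  proof (rule RF_from)
    fix g assume g: "g \<in> carrier ((GL_rec p)\<lparr>carrier := \<Gamma>\<rparr>)" "g \<noteq> \<one>\<^bsub>(GL_rec p)\<lparr>carrier := \<Gamma>\<rparr>\<^esub>"
    then have gG: "g \<in> \<Gamma>" "g \<noteq> rec_id p" by (simp_all add: GL_one)
    have gC: "g \<in> carrier (GL_rec p)" using subgroup.subset[OF sg] gG(1) by blast
    obtain l U0 V0 where lv: "U0 \<in> words p l" "V0 \<in> words p l" "g U0 V0 \<noteq> (if U0 = V0 then 1 else 0)"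
      using level[OF GL_pseries[OF gC] gG(2)] by blast
    define E where "E = (\<lambda>(A, U, V). A U V) ` ((S \<union> (\<lambda>A. inv\<^bsub>GL_rec p\<^esub> A) ` S) \<times> words p l \<times> words p l)"
    have fE: "finite E" unfolding E_def using fS finite_words by simp
    obtain L where L: "set L = E" using finite_list[OF fE] by blast
    define R where "R = rgen L"
    have R: "srng R" "PP R" "E \<subseteq> R" using rgen_props[of L] L unfolding R_def by auto
    have mem: "A U V \<in> R" if "A \<in> S \<union> (\<lambda>A. inv\<^bsub>GL_rec p\<^esub> A) ` S" "U \<in> words p l" "V \<in> words p l" for A U V
    proof -
      have "(A, U, V) \<in> (S \<union> (\<lambda>A. inv\<^bsub>GL_rec p\<^esub> A) ` S) \<times> words p l \<times> words p l" using that by blast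
      then have "(\<lambda>(A, U, V). A U V) (A, U, V) \<in> E" unfolding E_def by (rule imageI)
      then show ?thesis using R(3) by auto
    qed
    have entG: "ent p l R A" if "A \<in> generate (GL_rec p) S" for A
      using that
    proof (induction rule: generate.induct)
      case one
      then show ?case unfolding ent_def GL_one rec_id_def using srngD(1,2)[OF R(1)] by auto
    next
      case (incl h)
      then show ?case unfolding ent_def using mem by blast
    next
      case (inv h)
      then show ?case unfolding ent_def using mem by blast
    next
      case (eng h1 h2)
      then show ?case unfolding GL_mult using ent_mult[OF R(1)] by blast
    qed
    define x where "x = g U0 V0 - (if U0 = V0 then 1 else 0)"
    have xR: "x \<in> R" using entG[of g] gG(1) Gam lv(1,2) srngD(1,2,6)[OF R(1)] unfolding x_def ent_def by auto
    have x0: "x \<noteq> 0" using lv(3) unfolding x_def by simp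
    obtain I where I: "cmax R I" "x \<notin> I" using R(2) xR x0 unfolding PP_def by blast
    have Ii: "idl R I" "cofin R I" using I(1) unfolding cmax_def by auto
    show "\<exists>(H' :: ((nat list \<Rightarrow> 'k) set \<Rightarrow> (nat list \<Rightarrow> 'k) set) monoid) h. group H' \<and> finite (carrier H')
     \<and> h \<in> hom ((GL_rec p)\<lparr>carrier := \<Gamma>\<rparr>) H' \<and> h g \<noteq> \<one>\<^bsub>H'\<^esub>"
      by (rule core[OF R(1) Ii(1) Ii(2) subgroup.subset[OF sg] _ _ gG(1) lv(1,2) I(2)[unfolded x_def]])
        (use subgroup.m_inv_closed[OF sg] entG Gam in auto)
  qed
qed

end
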